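(* Let $1/2<H<1$, let $Z$ be a continuous fractional Brownian motion with Hurst parameter $H$, let $\alpha>0$, $a_t:=H\mathrm{e}^{\alpha t/H}/\alpha$, and $Y^{(\alpha)}_t:=\int_0^t\mathrm{e}^{-\alpha s}\,dZ_{a_s}$ (pathwise Riemann–Stieltjes integral), $t\ge0$. Then for $t_2>t_1\ge0$ and $s_2>s_1\ge0$, $$\mathbf{E}\Big(\big(Y^{(\alpha)}_{t_2}-Y^{(\alpha)}_{t_1}\big)\big(Y^{(\alpha)}_{s_2}-Y^{(\alpha)}_{s_1}\big)\Big)=C(\alpha,H)\int_{t_1}^{t_2}\int_{s_1}^{s_2}\frac{\mathrm{e}^{-\alpha(1-H)(u-v)/H}}{|1-\mathrm{e}^{-\alpha(u-v)/H}|^{2(1-H)}}\,dv\,du,$$ where $C(\alpha,H):=H(2H-1)(\alpha/H)^{2(1-H)}$. Moreover the kernel $$r_{\alpha,H}(u,v):=C(\alpha,H)\frac{\mathrm{e}^{-\alpha(1-H)(u-v)/H}}{|1-\mathrm{e}^{-\alpha(u-v)/H}|^{2(1-H)}}$$ is symmetric: $r_{\alpha,H}(u,v)=r_{\alpha,H}(v,u)$ for all $u,v\in\mathbf{R}$.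
   Context: A fractional Brownian motion with Hurst parameter $H$ is a centered Gaussian process on $[0,\infty)$ with covariance $\frac12(t^{2H}+s^{2H}-|t-s|^{2H})$. *)

theory Defs
  imports "HOL-Probability.Probability"
begin

definition rs_tagged_partition :: "real \<Rightarrow> real \<Rightarrow> real list \<Rightarrow> real list \<Rightarrow> bool" where
  "rs_tagged_partition a b xs ts \<longleftrightarrow>
     length xs \<ge> 2 \<and> sorted xs \<and> hd xs = a \<and> last xs = b \<and>
     length ts = length xs - 1 \<and>
     (\<forall>i < length ts. xs ! i \<le> ts ! i \<and> ts ! i \<le> xs ! (Suc i))"

definition rs_mesh_less :: "real list \<Rightarrow> real \<Rightarrow> bool" where
  "rs_mesh_less xs d \<longleftrightarrow> (\<forall>i. Suc i < length xs \<longrightarrow> xs ! (Suc i) - xs ! i < d)"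

definition rs_sum :: "(real \<Rightarrow> real) \<Rightarrow> (real \<Rightarrow> real) \<Rightarrow> real list \<Rightarrow> real list \<Rightarrow> real" where
  "rs_sum f g xs ts = (\<Sum>i < length ts. f (ts ! i) * (g (xs ! Suc i) - g (xs ! i)))"

definition has_rs_integral :: "(real \<Rightarrow> real) \<Rightarrow> (real \<Rightarrow> real) \<Rightarrow> real \<Rightarrow> real \<Rightarrow> real \<Rightarrow> bool" where
  "has_rs_integral f g a b I \<longleftrightarrow>
     (\<forall>e > 0. \<exists>d > 0. \<forall>xs ts. rs_tagged_partition a b xs ts \<and> rs_mesh_less xs d
        \<longrightarrow> \<bar>rs_sum f g xs ts - I\<bar> < e)"

definition rs_integral :: "(real \<Rightarrow> real) \<Rightarrow> (real \<Rightarrow> real) \<Rightarrow> real \<Rightarrow> real \<Rightarrow> real" where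
  "rs_integral f g a b = (THE I. has_rs_integral f g a b I)"

definition centered_gaussian_rv :: "'a measure \<Rightarrow> ('a \<Rightarrow> real) \<Rightarrow> real \<Rightarrow> bool" where
  "centered_gaussian_rv M X v \<longleftrightarrow>
     (if v = 0 then (AE \<omega> in M. X \<omega> = 0)
      else v > 0 \<and> distributed M lborel X (normal_density 0 (sqrt v)))"

definition continuous_fbm :: "'a measure \<Rightarrow> real \<Rightarrow> (real \<Rightarrow> 'a \<Rightarrow> real) \<Rightarrow> bool" where
  "continuous_fbm M H Z \<longleftrightarrow>
     prob_space M \<and>
     (\<forall>t \<ge> 0. Z t \<in> borel_measurable M) \<and>
     (\<forall>(ts :: real list) (cs :: real list). length ts = length cs \<and> (\<forall>t \<in> set ts. t \<ge> 0) \<longrightarrow>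
        (\<exists>v. centered_gaussian_rv M (\<lambda>\<omega>. \<Sum>i < length ts. cs ! i * Z (ts ! i) \<omega>) v)) \<and>
     (\<forall>t s. t \<ge> 0 \<longrightarrow> s \<ge> 0 \<longrightarrow>
        integral\<^sup>L M (\<lambda>\<omega>. Z t \<omega> * Z s \<omega>)
          = (t powr (2*H) + s powr (2*H) - \<bar>t - s\<bar> powr (2*H)) / 2) \<and>
     (\<forall>\<omega> \<in> space M. continuous_on {0..} (\<lambda>t. Z t \<omega>))"

definition fbm_time_change :: "real \<Rightarrow> real \<Rightarrow> real \<Rightarrow> real" where
  "fbm_time_change \<alpha> H t = H * exp (\<alpha> * t / H) / \<alpha>"

definition Y_alpha :: "real \<Rightarrow> real \<Rightarrow> (real \<Rightarrow> 'a \<Rightarrow> real) \<Rightarrow> real \<Rightarrow> 'a \<Rightarrow> real" where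
  "Y_alpha \<alpha> H Z t \<omega> = rs_integral (\<lambda>s. exp (- \<alpha> * s)) (\<lambda>s. Z (fbm_time_change \<alpha> H s) \<omega>) 0 t"

definition C_alpha_H :: "real \<Rightarrow> real \<Rightarrow> real" where
  "C_alpha_H \<alpha> H = H * (2*H - 1) * (\<alpha> / H) powr (2 * (1 - H))"

definition r_kernel :: "real \<Rightarrow> real \<Rightarrow> real \<Rightarrow> real \<Rightarrow> real" where
  "r_kernel \<alpha> H u v = C_alpha_H \<alpha> H *
     (exp (- \<alpha> * (1 - H) * (u - v) / H) / \<bar>1 - exp (- \<alpha> * (u - v) / H)\<bar> powr (2 * (1 - H)))"

end

theory Submission
  imports Defs
begin

lemma rs_piece:
  fixes g :: "real \<Rightarrow> real"
  assumes x0: "0 \<le> x" and xt: "x \<le> \<tau>" and ty: "\<tau> \<le> y" and al: "\<alpha> > 0"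
    and gc: "continuous_on {x..y} g"
    and ge: "\<forall>s\<in>{x..y}. \<forall>s'\<in>{x..y}. \<bar>g s - g s'\<bar> \<le> \<epsilon>"
  shows "abs (exp(-\<alpha> * \<tau>) * (g y - g x) - (exp(-\<alpha> * y) * g y - exp(-\<alpha> * x) * g x
            + \<alpha> * integral {x..y} (\<lambda>s. exp(-\<alpha> * s) * g s))) \<le> \<alpha> * \<epsilon> * (y - x)"
proof -
  have e0: "0 \<le> \<epsilon>" using ge xt ty by force
  have ftc: "((\<lambda>s. \<alpha> * exp(-\<alpha> * s)) has_integral (exp(-\<alpha> * u) - exp(-\<alpha> * v))) {u..v}"
    if "u \<le> v" for u v
  proof -
    have "((\<lambda>s. \<alpha> * exp(-\<alpha> * s)) has_integral ((\<lambda>s. - exp(-\<alpha> * s)) v - (\<lambda>s. - exp(-\<alpha> * s)) u)) {u..v}"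
      by (rule fundamental_theorem_of_calculus[OF that])
         (auto intro!: derivative_eq_intros simp: has_real_derivative_iff_has_vector_derivative[symmetric])
    then show ?thesis by simp
  qed
  have cfg: "continuous_on {x..y} (\<lambda>s. exp(-\<alpha> * s) * g s)"
    by (intro continuous_intros gc)
  have i1: "((\<lambda>s. exp(-\<alpha> * s) * g s) has_integral integral {x..\<tau>} (\<lambda>s. exp(-\<alpha> * s) * g s)) {x..\<tau>}"
    by (intro integrable_integral integrable_continuous_interval continuous_on_subset[OF cfg]) (use ty in auto)
  have i2: "((\<lambda>s. exp(-\<alpha> * s) * g s) has_integral integral {\<tau>..y} (\<lambda>s. exp(-\<alpha> * s) * g s)) {\<tau>..y}"
    by (intro integrable_integral integrable_continuous_interval continuous_on_subset[OF cfg]) (use xt in auto)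
  have comb: "integral {x..\<tau>} (\<lambda>s. exp(-\<alpha> * s) * g s) + integral {\<tau>..y} (\<lambda>s. exp(-\<alpha> * s) * g s)
      = integral {x..y} (\<lambda>s. exp(-\<alpha> * s) * g s)"
    by (intro Henstock_Kurzweil_Integration.integral_combine xt ty integrable_continuous_interval cfg)
  define I1 where "I1 = integral {x..\<tau>} (\<lambda>s. exp(-\<alpha> * s) * g s)"
  define I2 where "I2 = integral {\<tau>..y} (\<lambda>s. exp(-\<alpha> * s) * g s)"
  have A: "((\<lambda>s. \<alpha> * exp(-\<alpha> * s) * g x - \<alpha> * (exp(-\<alpha> * s) * g s)) has_integral
       ((exp(-\<alpha> * x) - exp(-\<alpha> * \<tau>)) * g x - \<alpha> * I1)) {x..\<tau>}"
    unfolding I1_def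
    by (intro has_integral_diff has_integral_mult_left has_integral_mult_right ftc i1 xt)
  have B: "((\<lambda>s. \<alpha> * exp(-\<alpha> * s) * g y - \<alpha> * (exp(-\<alpha> * s) * g s)) has_integral
       ((exp(-\<alpha> * \<tau>) - exp(-\<alpha> * y)) * g y - \<alpha> * I2)) {\<tau>..y}"
    unfolding I2_def
    by (intro has_integral_diff has_integral_mult_left has_integral_mult_right ftc i2 ty)
  have bA: "norm ((exp(-\<alpha> * x) - exp(-\<alpha> * \<tau>)) * g x - \<alpha> * I1) \<le> (\<alpha> * \<epsilon>) * Henstock_Kurzweil_Integration.content (cbox x \<tau>)"
  proof (rule has_integral_bound[where f="\<lambda>s. \<alpha> * exp(-\<alpha> * s) * g x - \<alpha> * (exp(-\<alpha> * s) * g s)"])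
    show "0 \<le> \<alpha> * \<epsilon>" using al e0 by simp
    show "((\<lambda>s. \<alpha> * exp(-\<alpha> * s) * g x - \<alpha> * (exp(-\<alpha> * s) * g s)) has_integral
       ((exp(-\<alpha> * x) - exp(-\<alpha> * \<tau>)) * g x - \<alpha> * I1)) (cbox x \<tau>)" using A by simp
    fix s assume s: "s \<in> cbox x \<tau>"
    have s': "s \<in> {x..y}" "x \<le> s" using s xt ty by auto
    have "\<alpha> * exp(-\<alpha> * s) * g x - \<alpha> * (exp(-\<alpha> * s) * g s) = (\<alpha> * exp(-\<alpha> * s)) * (g x - g s)"
      by (simp add: algebra_simps)
    then have "norm (\<alpha> * exp(-\<alpha> * s) * g x - \<alpha> * (exp(-\<alpha> * s) * g s)) = (\<alpha> * exp(-\<alpha> * s)) * \<bar>g x - g s\<bar>"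
      using al by (simp only: real_norm_def abs_mult) simp
    also have "\<dots> \<le> (\<alpha> * 1) * \<epsilon>"
    proof (rule mult_mono)
      have "exp(-\<alpha> * s) \<le> 1" using al x0 s' by (simp add: mult_nonneg_nonneg)
      then show "\<alpha> * exp(-\<alpha> * s) \<le> \<alpha> * 1" using al by (intro mult_left_mono) auto
      show "\<bar>g x - g s\<bar> \<le> \<epsilon>" using ge s'(1) xt ty by auto
    qed (use al in auto)
    finally show "norm (\<alpha> * exp(-\<alpha> * s) * g x - \<alpha> * (exp(-\<alpha> * s) * g s)) \<le> \<alpha> * \<epsilon>" by simp
  qed
  have bB: "norm ((exp(-\<alpha> * \<tau>) - exp(-\<alpha> * y)) * g y - \<alpha> * I2) \<le> (\<alpha> * \<epsilon>) * Henstock_Kurzweil_Integration.content (cbox \<tau> y)"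
  proof (rule has_integral_bound[where f="\<lambda>s. \<alpha> * exp(-\<alpha> * s) * g y - \<alpha> * (exp(-\<alpha> * s) * g s)"])
    show "0 \<le> \<alpha> * \<epsilon>" using al e0 by simp
    show "((\<lambda>s. \<alpha> * exp(-\<alpha> * s) * g y - \<alpha> * (exp(-\<alpha> * s) * g s)) has_integral
       ((exp(-\<alpha> * \<tau>) - exp(-\<alpha> * y)) * g y - \<alpha> * I2)) (cbox \<tau> y)" using B by simp
    fix s assume s: "s \<in> cbox \<tau> y"
    have s': "s \<in> {x..y}" "\<tau> \<le> s" using s xt ty by auto
    have "\<alpha> * exp(-\<alpha> * s) * g y - \<alpha> * (exp(-\<alpha> * s) * g s) = (\<alpha> * exp(-\<alpha> * s)) * (g y - g s)"
      by (simp add: algebra_simps)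
    then have "norm (\<alpha> * exp(-\<alpha> * s) * g y - \<alpha> * (exp(-\<alpha> * s) * g s)) = (\<alpha> * exp(-\<alpha> * s)) * \<bar>g y - g s\<bar>"
      using al by (simp only: real_norm_def abs_mult) simp
    also have "\<dots> \<le> (\<alpha> * 1) * \<epsilon>"
    proof (rule mult_mono)
      have "exp(-\<alpha> * s) \<le> 1" using al x0 s' by (simp add: mult_nonneg_nonneg)
      then show "\<alpha> * exp(-\<alpha> * s) \<le> \<alpha> * 1" using al by (intro mult_left_mono) auto
      show "\<bar>g y - g s\<bar> \<le> \<epsilon>" using ge s'(1) xt ty by auto
    qed (use al in auto)
    finally show "norm (\<alpha> * exp(-\<alpha> * s) * g y - \<alpha> * (exp(-\<alpha> * s) * g s)) \<le> \<alpha> * \<epsilon>" by simp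
  qed
  have eq: "exp(-\<alpha> * \<tau>) * (g y - g x) - (exp(-\<alpha> * y) * g y - exp(-\<alpha> * x) * g x
            + \<alpha> * integral {x..y} (\<lambda>s. exp(-\<alpha> * s) * g s))
     = ((exp(-\<alpha> * x) - exp(-\<alpha> * \<tau>)) * g x - \<alpha> * I1) + ((exp(-\<alpha> * \<tau>) - exp(-\<alpha> * y)) * g y - \<alpha> * I2)"
    unfolding comb[symmetric] I1_def I2_def by (simp add: algebra_simps)
  have c1: "Henstock_Kurzweil_Integration.content (cbox x \<tau>) = \<tau> - x" using xt by simp
  have c2: "Henstock_Kurzweil_Integration.content (cbox \<tau> y) = y - \<tau>" using ty by simp
  have tri: "\<bar>((exp(-\<alpha> * x) - exp(-\<alpha> * \<tau>)) * g x - \<alpha> * I1) + ((exp(-\<alpha> * \<tau>) - exp(-\<alpha> * y)) * g y - \<alpha> * I2)\<bar>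
     \<le> \<alpha> * \<epsilon> * (\<tau> - x) + \<alpha> * \<epsilon> * (y - \<tau>)"
    using bA bB unfolding c1 c2 real_norm_def by (intro order_trans[OF abs_triangle_ineq add_mono])
  show ?thesis unfolding eq using tri by (simp add: algebra_simps)
qed

lemma rs_exists:
  fixes g :: "real \<Rightarrow> real"
  assumes a0: "0 \<le> a" and ab: "a \<le> b" and al: "\<alpha> > 0" and gc: "continuous_on {a..b} g"
  shows "has_rs_integral (\<lambda>s. exp (- \<alpha> * s)) g a b
           (exp (- \<alpha> * b) * g b - exp (- \<alpha> * a) * g a + \<alpha> * integral {a..b} (\<lambda>s. exp (- \<alpha> * s) * g s))"
  unfolding has_rs_integral_def
proof (intro allI impI)
  fix e :: real assume e: "e > 0"
  define \<epsilon> where "\<epsilon> = e / (2 * (\<alpha> * (b - a) + 1))"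
  have den: "\<alpha> * (b - a) + 1 > 0" using mult_nonneg_nonneg[of \<alpha> "b - a"] al ab by linarith
  have eps: "\<epsilon> > 0" unfolding \<epsilon>_def using e den by simp
  have uc: "uniformly_continuous_on {a..b} g"
    by (rule compact_uniformly_continuous[OF gc compact_Icc])
  obtain d where d: "d > 0" and dd: "\<And>s s'. s \<in> {a..b} \<Longrightarrow> s' \<in> {a..b} \<Longrightarrow> dist s' s < d \<Longrightarrow> dist (g s') (g s) < \<epsilon>"
    using uc eps unfolding uniformly_continuous_on_def by metis
  define G where "G x = exp (- \<alpha> * x) * g x + \<alpha> * integral {a..x} (\<lambda>s. exp (- \<alpha> * s) * g s)" for x
  have cfg: "continuous_on {a..b} (\<lambda>s. exp (- \<alpha> * s) * g s)"
    by (intro continuous_intros gc)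
  show "\<exists>d>0. \<forall>xs ts. rs_tagged_partition a b xs ts \<and> rs_mesh_less xs d \<longrightarrow>
          \<bar>rs_sum (\<lambda>s. exp (- \<alpha> * s)) g xs ts - (exp (- \<alpha> * b) * g b - exp (- \<alpha> * a) * g a + \<alpha> * integral {a..b} (\<lambda>s. exp (- \<alpha> * s) * g s))\<bar> < e"
  proof (intro exI[of _ d] conjI allI impI d)
    fix xs ts assume H: "rs_tagged_partition a b xs ts \<and> rs_mesh_less xs d"
    define n where "n = length ts"
    have len: "length xs = Suc n" "length xs \<ge> 2" and srt: "sorted xs" and hd: "hd xs = a" and lst: "last xs = b"
      and tg: "\<And>i. i < n \<Longrightarrow> xs ! i \<le> ts ! i \<and> ts ! i \<le> xs ! Suc i"
      using H unfolding rs_tagged_partition_def n_def by auto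
    have mesh: "\<And>i. i < n \<Longrightarrow> xs ! Suc i - xs ! i < d" using H len unfolding rs_mesh_less_def by auto
    have x0: "xs ! 0 = a" using hd len by (metis hd_conv_nth list.size(3) nat.distinct(1))
    have xn: "xs ! n = b" using lst len by (metis diff_Suc_1 last_conv_nth list.size(3) nat.distinct(1))
    have inab: "xs ! j \<in> {a..b}" if "j \<le> n" for j
    proof -
      have "xs ! 0 \<le> xs ! j" "xs ! j \<le> xs ! n" using srt that len by (auto intro: sorted_nth_mono)
      then show ?thesis using x0 xn by auto
    qed
    have step: "\<bar>exp (- \<alpha> * (ts ! i)) * (g (xs ! Suc i) - g (xs ! i)) - (G (xs ! Suc i) - G (xs ! i))\<bar>
                 \<le> \<alpha> * \<epsilon> * (xs ! Suc i - xs ! i)" if i: "i < n" for i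
    proof -
      define x y where "x = xs ! i" and "y = xs ! Suc i"
      have xab: "x \<in> {a..b}" "y \<in> {a..b}" using inab i unfolding x_def y_def by auto
      have xy: "x \<le> ts ! i" "ts ! i \<le> y" using tg[OF i] unfolding x_def y_def by auto
      have comb: "integral {a..x} (\<lambda>s. exp (- \<alpha> * s) * g s) + integral {x..y} (\<lambda>s. exp (- \<alpha> * s) * g s)
          = integral {a..y} (\<lambda>s. exp (- \<alpha> * s) * g s)"
        using xab xy
        by (intro Henstock_Kurzweil_Integration.integral_combine integrable_continuous_interval continuous_on_subset[OF cfg]) auto
      have Gd: "G y - G x = exp (- \<alpha> * y) * g y - exp (- \<alpha> * x) * g x + \<alpha> * integral {x..y} (\<lambda>s. exp (- \<alpha> * s) * g s)"
        unfolding G_def comb[symmetric] by (simp add: algebra_simps)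
      have "\<bar>exp (- \<alpha> * (ts ! i)) * (g y - g x) - (exp (- \<alpha> * y) * g y - exp (- \<alpha> * x) * g x + \<alpha> * integral {x..y} (\<lambda>s. exp (- \<alpha> * s) * g s))\<bar>
            \<le> \<alpha> * \<epsilon> * (y - x)"
      proof (rule rs_piece)
        show "0 \<le> x" using xab a0 by auto
        show "continuous_on {x..y} g" using xab by (intro continuous_on_subset[OF gc]) auto
        show "\<forall>s\<in>{x..y}. \<forall>s'\<in>{x..y}. \<bar>g s - g s'\<bar> \<le> \<epsilon>"
        proof (intro ballI)
          fix s s' assume "s \<in> {x..y}" "s' \<in> {x..y}"
          moreover have "y - x < d" using mesh[OF i] unfolding x_def y_def .
          ultimately have "dist (g s) (g s') < \<epsilon>" using xab by (intro dd) (auto simp: dist_real_def)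
          then show "\<bar>g s - g s'\<bar> \<le> \<epsilon>" by (simp add: dist_real_def)
        qed
      qed (use xy al in auto)
      then show ?thesis using Gd unfolding x_def y_def by simp
    qed
    have tel: "(\<Sum>i<n. G (xs ! Suc i) - G (xs ! i)) = G b - G a"
      using sum_lessThan_telescope[of "\<lambda>i. G (xs ! i)" n] x0 xn by simp
    have tel2: "(\<Sum>i<n. xs ! Suc i - xs ! i) = b - a"
      using sum_lessThan_telescope[of "\<lambda>i. xs ! i" n] x0 xn by simp
    have Ga: "G a = exp (- \<alpha> * a) * g a" unfolding G_def by simp
    have "rs_sum (\<lambda>s. exp (- \<alpha> * s)) g xs ts - (G b - G a)
        = (\<Sum>i<n. exp (- \<alpha> * (ts ! i)) * (g (xs ! Suc i) - g (xs ! i)) - (G (xs ! Suc i) - G (xs ! i)))"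
      unfolding rs_sum_def n_def[symmetric] tel[symmetric] by (simp add: sum_subtractf)
    also have "\<bar>\<dots>\<bar> \<le> (\<Sum>i<n. \<alpha> * \<epsilon> * (xs ! Suc i - xs ! i))"
      by (rule order_trans[OF sum_abs sum_mono]) (rule step, simp)
    also have "\<dots> = \<alpha> * \<epsilon> * (b - a)" by (simp add: sum_distrib_left[symmetric] tel2)
    also have "\<dots> < e"
    proof -
      have "\<alpha> * \<epsilon> * (b - a) = e * (\<alpha> * (b - a)) / (2 * (\<alpha> * (b - a) + 1))" unfolding \<epsilon>_def by simp
      also have "\<dots> < e" using e den al ab by (simp add: divide_less_eq)
      finally show ?thesis .
    qed
    finally show "\<bar>rs_sum (\<lambda>s. exp (- \<alpha> * s)) g xs ts - (exp (- \<alpha> * b) * g b - exp (- \<alpha> * a) * g a + \<alpha> * integral {a..b} (\<lambda>s. exp (- \<alpha> * s) * g s))\<bar> < e"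
      unfolding Ga by (simp add: G_def algebra_simps)
  qed
qed

lemma rs_partition_exists:
  assumes ab: "a \<le> b" and d: "d > 0"
  shows "\<exists>xs ts. rs_tagged_partition a b xs ts \<and> rs_mesh_less xs d"
proof -
  define n :: nat where "n = nat \<lceil>(b - a) / d\<rceil> + 1"
  have n1: "n \<ge> 1" unfolding n_def by simp
  have "(b - a) / d < real n" unfolding n_def by linarith
  then have bn: "(b - a) / real n < d" using d n1 by (simp add: field_simps)
  define P where "P k = a + (b - a) * real k / real n" for k :: nat
  have Pmono: "P i \<le> P j" if "i \<le> j" for i j
    unfolding P_def using ab that by (intro add_left_mono divide_right_mono mult_left_mono) auto
  define xs where "xs = map P [0..<Suc n]"
  define ts where "ts = map P [0..<n]"
  have "rs_tagged_partition a b xs ts"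
    unfolding rs_tagged_partition_def
  proof (intro conjI)
    show "2 \<le> length xs" using n1 unfolding xs_def by simp
    show "sorted xs" unfolding xs_def sorted_iff_nth_mono by (auto simp del: upt_Suc intro: Pmono)
    show "hd xs = a" unfolding xs_def P_def by (simp add: hd_map)
    show "last xs = b" unfolding xs_def P_def using n1 by (simp add: last_map)
    show "length ts = length xs - 1" unfolding xs_def ts_def by simp
    show "\<forall>i<length ts. xs ! i \<le> ts ! i \<and> ts ! i \<le> xs ! Suc i"
      unfolding xs_def ts_def by (auto simp del: upt_Suc intro: Pmono)
  qed
  moreover have "rs_mesh_less xs d"
    unfolding rs_mesh_less_def
  proof (intro allI impI)
    fix i assume "Suc i < length xs"
    then have i: "Suc i < Suc n" unfolding xs_def by simp
    have "xs ! Suc i - xs ! i = P (Suc i) - P i" unfolding xs_def using i by (simp del: upt_Suc)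
    also have "\<dots> = (b - a) / real n" unfolding P_def using n1 by (simp add: field_simps)
    finally show "xs ! Suc i - xs ! i < d" using bn by simp
  qed
  ultimately show ?thesis by blast
qed

lemma rs_unique:
  assumes ab: "a \<le> b" and I: "has_rs_integral f g a b I" and J: "has_rs_integral f g a b J"
  shows "I = J"
proof (rule ccontr)
  assume ne: "I \<noteq> J"
  define e where "e = \<bar>I - J\<bar> / 2"
  have e: "e > 0" using ne unfolding e_def by simp
  obtain d1 where d1: "d1 > 0" "\<And>xs ts. rs_tagged_partition a b xs ts \<and> rs_mesh_less xs d1 \<Longrightarrow> \<bar>rs_sum f g xs ts - I\<bar> < e"
    using I e unfolding has_rs_integral_def by blast
  obtain d2 where d2: "d2 > 0" "\<And>xs ts. rs_tagged_partition a b xs ts \<and> rs_mesh_less xs d2 \<Longrightarrow> \<bar>rs_sum f g xs ts - J\<bar> < e"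
    using J e unfolding has_rs_integral_def by blast
  obtain xs ts where P: "rs_tagged_partition a b xs ts" "rs_mesh_less xs (min d1 d2)"
    using rs_partition_exists[OF ab, of "min d1 d2"] d1 d2 by auto
  have "rs_mesh_less xs d1" "rs_mesh_less xs d2" using P(2) unfolding rs_mesh_less_def by auto
  then have "\<bar>rs_sum f g xs ts - I\<bar> < e" "\<bar>rs_sum f g xs ts - J\<bar> < e" using d1 d2 P by auto
  then show False unfolding e_def by (auto simp: abs_if split: if_splits)
qed

lemma rs_integral_eq:
  assumes "a \<le> b" "has_rs_integral f g a b I"
  shows "rs_integral f g a b = I"
  unfolding rs_integral_def using assms rs_unique by blast

definition sgnpow :: "real \<Rightarrow> real \<Rightarrow> real" where
  "sgnpow q x = max x 0 powr q - max (- x) 0 powr q"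

lemma sgnpow_pos: "x > 0 \<Longrightarrow> sgnpow q x = x powr q"
  unfolding sgnpow_def by simp

lemma sgnpow_neg: "x < 0 \<Longrightarrow> sgnpow q x = - ((- x) powr q)"
  unfolding sgnpow_def by simp

lemma sgnpow_cont: assumes "q > 0" shows "continuous_on UNIV (sgnpow q)"
  unfolding sgnpow_def using assms
  by (intro continuous_intros continuous_on_powr') auto

lemma abs_powr_cont: assumes "p > 0" shows "continuous_on UNIV (\<lambda>x::real. \<bar>x\<bar> powr p)"
  using assms by (intro continuous_on_powr' continuous_intros) auto

lemma abs_powr_deriv:
  assumes x: "x \<noteq> 0"
  shows "((\<lambda>x::real. \<bar>x\<bar> powr p) has_real_derivative (p * sgnpow (p - 1) x)) (at x)"
proof (cases "x > 0")
  case True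
  have "((\<lambda>x. x powr p) has_real_derivative (p * x powr (p - 1))) (at x)"
    by (rule has_real_derivative_powr[OF True])
  then have "((\<lambda>x. x powr p) has_real_derivative (p * sgnpow (p - 1) x)) (at x)"
    using True by (simp add: sgnpow_pos)
  then show ?thesis
    by (rule has_field_derivative_transform_within_open[where S="{0<..}"])
       (use True in \<open>auto simp: sgnpow_pos\<close>)
next
  case False
  then have xn: "x < 0" using x by simp
  have "((\<lambda>x. (- x) powr p) has_real_derivative (p * (- x) powr (p - 1) * (- 1))) (at x)"
    using has_real_derivative_powr[of "- x" p] xn
    by (intro DERIV_chain2[where f="\<lambda>x. x powr p"] derivative_eq_intros) auto
  then have "((\<lambda>x. (- x) powr p) has_real_derivative (p * sgnpow (p - 1) x)) (at x)"
    using xn by (simp add: sgnpow_neg)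
  then show ?thesis
    by (rule has_field_derivative_transform_within_open[where S="{..<0}"])
       (use xn in \<open>auto simp: sgnpow_neg\<close>)
qed

lemma sgnpow_deriv:
  assumes x: "x \<noteq> 0"
  shows "(sgnpow q has_real_derivative (q * \<bar>x\<bar> powr (q - 1))) (at x)"
proof (cases "x > 0")
  case True
  have "((\<lambda>x. x powr q) has_real_derivative (q * x powr (q - 1))) (at x)"
    by (rule has_real_derivative_powr[OF True])
  then have "((\<lambda>x. x powr q) has_real_derivative (q * \<bar>x\<bar> powr (q - 1))) (at x)"
    using True by simp
  then show ?thesis
    by (rule has_field_derivative_transform_within_open[where S="{0<..}"])
       (use True in \<open>auto simp: sgnpow_pos\<close>)
next
  case False
  then have xn: "x < 0" using x by simp
  have "((\<lambda>x. - ((- x) powr q)) has_real_derivative - (q * (- x) powr (q - 1) * (- 1))) (at x)"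
    using has_real_derivative_powr[of "- x" q] xn
    by (intro derivative_intros DERIV_chain2[where f="\<lambda>x. x powr q"] derivative_eq_intros) auto
  then have "((\<lambda>x. - ((- x) powr q)) has_real_derivative (q * \<bar>x\<bar> powr (q - 1))) (at x)"
    using xn by simp
  then show ?thesis
    by (rule has_field_derivative_transform_within_open[where S="{..<0}"])
       (use xn in \<open>auto simp: sgnpow_neg\<close>)
qed

definition LO :: "real \<Rightarrow> real \<Rightarrow> real \<Rightarrow> (real \<Rightarrow> real) \<Rightarrow> real" where
  "LO \<alpha> c d h = exp (- \<alpha> * d) * h d - exp (- \<alpha> * c) * h c + \<alpha> * integral {c..d} (\<lambda>u. exp (- \<alpha> * u) * h u)"

lemma LO_ftc:
  assumes cd: "c \<le> d" and S: "finite S" and hc: "continuous_on {c..d} h"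
    and hd: "\<And>x. x \<in> {c<..<d} - S \<Longrightarrow> (h has_real_derivative h' x) (at x)"
  shows "((\<lambda>u. exp (- \<alpha> * u) * h' u) has_integral LO \<alpha> c d h) {c..d}"
proof -
  have 1: "((\<lambda>u. - \<alpha> * exp (- \<alpha> * u) * h u + exp (- \<alpha> * u) * h' u) has_integral
           (exp (- \<alpha> * d) * h d - exp (- \<alpha> * c) * h c)) {c..d}"
  proof (rule fundamental_theorem_of_calculus_interior_strong[OF S cd])
    fix x assume "x \<in> {c<..<d} - S"
    then show "((\<lambda>u. exp (- \<alpha> * u) * h u) has_vector_derivative
             - \<alpha> * exp (- \<alpha> * x) * h x + exp (- \<alpha> * x) * h' x) (at x)"
      using hd unfolding has_real_derivative_iff_has_vector_derivative[symmetric]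
      by (auto intro!: derivative_eq_intros)
  qed (intro continuous_intros hc)
  have 2: "((\<lambda>u. \<alpha> * (exp (- \<alpha> * u) * h u)) has_integral \<alpha> * integral {c..d} (\<lambda>u. exp (- \<alpha> * u) * h u)) {c..d}"
    by (intro has_integral_mult_right integrable_integral integrable_continuous_interval continuous_intros hc)
  have "((\<lambda>u. (- \<alpha> * exp (- \<alpha> * u) * h u + exp (- \<alpha> * u) * h' u) + \<alpha> * (exp (- \<alpha> * u) * h u)) has_integral
           LO \<alpha> c d h) {c..d}"
    unfolding LO_def by (rule has_integral_add[OF 1 2])
  then show ?thesis by (simp add: algebra_simps)
qed

lemma LO_const:
  assumes cd: "c \<le> d"
  shows "LO \<alpha> c d (\<lambda>_. k) = 0"
proof -
  have "((\<lambda>u. exp (- \<alpha> * u) * 0) has_integral LO \<alpha> c d (\<lambda>_. k)) {c..d}"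
    by (rule LO_ftc[OF cd, of "{}"]) auto
  then show ?thesis by (simp add: has_integral_0_eq)
qed

lemma LO_add:
  assumes "continuous_on {c..d} f" "continuous_on {c..d} g"
  shows "LO \<alpha> c d (\<lambda>u. f u + g u) = LO \<alpha> c d f + LO \<alpha> c d g"
proof -
  have "integral {c..d} (\<lambda>u. exp (- \<alpha> * u) * (f u + g u))
      = integral {c..d} (\<lambda>u. exp (- \<alpha> * u) * f u) + integral {c..d} (\<lambda>u. exp (- \<alpha> * u) * g u)"
    unfolding distrib_left
    by (intro integral_add integrable_continuous_interval continuous_intros assms)
  then show ?thesis unfolding LO_def by (simp add: algebra_simps)
qed

lemma LO_scale: "LO \<alpha> c d (\<lambda>u. k * f u) = k * LO \<alpha> c d f"
proof -
  have "integral {c..d} (\<lambda>u. exp (- \<alpha> * u) * (k * f u)) = k * integral {c..d} (\<lambda>u. exp (- \<alpha> * u) * f u)"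
    by (simp add: mult.left_commute)
  then show ?thesis unfolding LO_def by (simp add: algebra_simps)
qed

lemma lbint_nonneg_eq:
  fixes f :: "real \<Rightarrow> real"
  assumes cd: "c \<le> d" and fm: "f \<in> borel_measurable borel" and fi: "f integrable_on {c..d}"
    and nn: "\<And>x. x \<in> {c..d} \<Longrightarrow> 0 \<le> f x"
  shows "(LBINT x=c..d. f x) = integral {c..d} f"
proof -
  have "set_integrable lebesgue {c..d} f"
    by (rule nonnegative_absolutely_integrable_1[OF fi nn])
  then have "set_integrable lborel {c..d} f"
    unfolding set_integrable_def using fm by (subst (asm) integrable_completion) auto
  then show ?thesis by (rule interval_integral_eq_integral[OF cd])
qed

locale fbmp =
  fixes \<alpha> H :: real
  assumes al: "\<alpha> > 0" and H1: "1/2 < H" and H2: "H < 1"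
begin

abbreviation a where "a \<equiv> fbm_time_change \<alpha> H"

definition psi where "psi u v = \<bar>a u - a v\<bar> powr (2 * H)"
definition D1 where "D1 u v = 2 * H * sgnpow (2 * H - 1) (a u - a v) * exp (\<alpha> * u / H)"
definition D2 where "D2 u v = - (2 * H * (2 * H - 1)) * \<bar>a u - a v\<bar> powr (2 * H - 2) * exp (\<alpha> * u / H) * exp (\<alpha> * v / H)"
definition K where "K u v = exp (- \<alpha> * (1 - H) * (u - v) / H) / \<bar>1 - exp (- \<alpha> * (u - v) / H)\<bar> powr (2 * (1 - H))"

lemma Hpos: "H > 0" using H1 by simp

lemma a_pos: "a u > 0"
  unfolding fbm_time_change_def using al Hpos by simp

lemma a_deriv: "(a has_real_derivative exp (\<alpha> * u / H)) (at u)"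
  unfolding fbm_time_change_def using al Hpos
  by (auto intro!: derivative_eq_intros simp: field_simps)

lemma a_cont: "continuous_on A a"
  unfolding fbm_time_change_def using al Hpos by (auto intro!: continuous_intros)

lemma a_inj: "a u = a v \<longleftrightarrow> u = v"
  unfolding fbm_time_change_def using al Hpos by auto

lemma a_diff: "a u - a v = (H / \<alpha>) * exp (\<alpha> * u / H) * (1 - exp (- \<alpha> * (u - v) / H))"
proof -
  have "exp (\<alpha> * u / H) * exp (- \<alpha> * (u - v) / H) = exp (\<alpha> * u / H + - \<alpha> * (u - v) / H)"
    by (simp add: mult_exp_exp)
  also have "\<dots> = exp (\<alpha> * v / H)"
    by (rule arg_cong[where f=exp]) (use Hpos in \<open>simp add: field_simps\<close>)
  finally have "exp (\<alpha> * u / H) * exp (- \<alpha> * (u - v) / H) = exp (\<alpha> * v / H)" .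
  then show ?thesis unfolding fbm_time_change_def by (simp add: algebra_simps)
qed

lemma psi_deriv: assumes "u \<noteq> v" shows "((\<lambda>u. psi u v) has_real_derivative D1 u v) (at u)"
proof -
  have ne: "a u - a v \<noteq> 0" using assms a_inj by simp
  have "((\<lambda>u. \<bar>a u - a v\<bar> powr (2 * H)) has_real_derivative
          (2 * H * sgnpow (2 * H - 1) (a u - a v)) * (exp (\<alpha> * u / H) - 0)) (at u)"
    by (rule DERIV_chain2[where f="\<lambda>x. \<bar>x\<bar> powr (2 * H)" and g="\<lambda>u. a u - a v", OF abs_powr_deriv[OF ne]]) (intro derivative_intros a_deriv)
  then show ?thesis unfolding psi_def D1_def by simp
qed

lemma D1_deriv: assumes "u \<noteq> v" shows "((\<lambda>v. D1 u v) has_real_derivative D2 u v) (at v)"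
proof -
  have ne: "a u - a v \<noteq> 0" using assms a_inj by simp
  have "((\<lambda>v. sgnpow (2 * H - 1) (a u - a v)) has_real_derivative
          ((2 * H - 1) * \<bar>a u - a v\<bar> powr (2 * H - 1 - 1)) * (0 - exp (\<alpha> * v / H))) (at v)"
    by (rule DERIV_chain2[where f="sgnpow (2 * H - 1)" and g="\<lambda>v. a u - a v", OF sgnpow_deriv[OF ne]]) (intro derivative_intros a_deriv)
  then have "((\<lambda>v. (2 * H * exp (\<alpha> * u / H)) * sgnpow (2 * H - 1) (a u - a v)) has_real_derivative
          (2 * H * exp (\<alpha> * u / H)) * ((2 * H - 1) * \<bar>a u - a v\<bar> powr (2 * H - 1 - 1) * (0 - exp (\<alpha> * v / H)))) (at v)"
    by (rule DERIV_cmult)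
  then show ?thesis unfolding D1_def D2_def by (simp add: algebra_simps)
qed

lemma psi_cont: "continuous_on A (\<lambda>u. psi u v)"
  unfolding psi_def using Hpos
  by (intro continuous_on_powr' continuous_intros a_cont) auto

lemma D1_cont: "continuous_on A (\<lambda>x. D1 (fst x) (snd x))"
proof -
  have "continuous_on A (\<lambda>x. sgnpow (2 * H - 1) (a (fst x) - a (snd x)))"
    by (rule continuous_on_compose2[OF sgnpow_cont]) (use H1 in \<open>auto intro!: continuous_intros continuous_on_compose2[OF a_cont]\<close>)
  then show ?thesis unfolding D1_def using Hpos
    by (intro continuous_intros) auto
qed

lemma kernel_id: "exp (- \<alpha> * u) * exp (- \<alpha> * v) * D2 u v = - 2 * C_alpha_H \<alpha> H * K u v"
proof (cases "u = v")
  case True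
  then show ?thesis unfolding D2_def K_def by simp
next
  case False
  define \<rho> where "\<rho> = 1 - exp (- \<alpha> * (u - v) / H)"
  have rne: "\<rho> \<noteq> 0" unfolding \<rho>_def using False al Hpos by simp
  have ad: "\<bar>a u - a v\<bar> = (H / \<alpha>) * exp (\<alpha> * u / H) * \<bar>\<rho>\<bar>"
    unfolding a_diff \<rho>_def using al Hpos by (simp add: abs_mult)
  have lnad: "ln \<bar>a u - a v\<bar> = ln H - ln \<alpha> + \<alpha> * u / H + ln \<bar>\<rho>\<bar>"
    unfolding ad using al Hpos rne by (simp add: ln_mult ln_div)
  have ne: "\<bar>a u - a v\<bar> \<noteq> 0" using False a_inj by simp
  have "exp (- \<alpha> * u) * exp (- \<alpha> * v) * D2 u v
      = - (2 * H * (2 * H - 1)) * exp (- \<alpha> * u + - \<alpha> * v + (2 * H - 2) * ln \<bar>a u - a v\<bar> + \<alpha> * u / H + \<alpha> * v / H)"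
  proof -
    have "\<bar>a u - a v\<bar> powr (2 * H - 2) = exp ((2 * H - 2) * ln \<bar>a u - a v\<bar>)" using ne by (simp add: powr_def)
    then show ?thesis unfolding D2_def exp_add by (simp only: mult_ac)
  qed
  also have "- \<alpha> * u + - \<alpha> * v + (2 * H - 2) * ln \<bar>a u - a v\<bar> + \<alpha> * u / H + \<alpha> * v / H
      = 2 * (1 - H) * (ln \<alpha> - ln H) + (- \<alpha> * (1 - H) * (u - v) / H) - 2 * (1 - H) * ln \<bar>\<rho>\<bar>"
    unfolding lnad using Hpos by (simp add: field_simps)
  also have "- (2 * H * (2 * H - 1)) * exp (2 * (1 - H) * (ln \<alpha> - ln H) + (- \<alpha> * (1 - H) * (u - v) / H) - 2 * (1 - H) * ln \<bar>\<rho>\<bar>)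
      = - 2 * C_alpha_H \<alpha> H * K u v"
  proof -
    have p1: "(\<alpha> / H) powr (2 * (1 - H)) = exp (2 * (1 - H) * (ln \<alpha> - ln H))"
      using al Hpos by (simp add: powr_def ln_div)
    have p2: "\<bar>\<rho>\<bar> powr (2 * (1 - H)) = exp (2 * (1 - H) * ln \<bar>\<rho>\<bar>)"
      using rne by (simp add: powr_def)
    have gen: "\<And>X B L. - (2 * H * (2 * H - 1)) * (exp X * exp B / exp L) = - 2 * (H * (2 * H - 1) * exp X) * (exp B / exp L)"
      by (simp add: algebra_simps)
    show ?thesis
      unfolding C_alpha_H_def K_def \<rho>_def[symmetric] p1 p2 exp_diff exp_add by (rule gen)
  qed
  finally show ?thesis .
qed

lemma K_nonneg: "K u v \<ge> 0"
  unfolding K_def by simp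

lemma K_meas: "(\<lambda>v. K u v) \<in> borel_measurable borel"
  unfolding K_def by measurable

lemma C_pos: "C_alpha_H \<alpha> H > 0"
  unfolding C_alpha_H_def using H1 al by simp

lemma D1_cont_v: "continuous_on A (\<lambda>v. D1 u v)"
  using continuous_on_compose2[OF D1_cont[of UNIV], of A "\<lambda>v. (u, v)"] continuous_on_Pair[OF continuous_on_const continuous_on_id] by auto

lemma D1_cont_u: "continuous_on A (\<lambda>u. D1 u v)"
  using continuous_on_compose2[OF D1_cont[of UNIV], of A "\<lambda>u. (u, v)"] continuous_on_Pair[OF continuous_on_id continuous_on_const] by auto

lemma LO_psi: assumes "c \<le> d"
  shows "((\<lambda>u. exp (- \<alpha> * u) * D1 u v) has_integral LO \<alpha> c d (\<lambda>u. psi u v)) {c..d}"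
  by (rule LO_ftc[OF assms, of "{v}"]) (auto intro: psi_cont psi_deriv)

lemma LO_D1: assumes "c \<le> d"
  shows "((\<lambda>v. exp (- \<alpha> * v) * D2 u v) has_integral LO \<alpha> c d (\<lambda>v. D1 u v)) {c..d}"
  by (rule LO_ftc[OF assms, of "{u}"]) (auto intro: D1_cont_v D1_deriv)

definition R where "R x y = (x powr (2 * H) + y powr (2 * H) - \<bar>x - y\<bar> powr (2 * H)) / 2"

lemma Phi_eq: assumes t: "t1 \<le> t2"
  shows "LO \<alpha> t1 t2 (\<lambda>u. R (a u) (a v)) =
     LO \<alpha> t1 t2 (\<lambda>u. a u powr (2 * H) / 2) + (- 1 / 2) * integral {t1..t2} (\<lambda>u. exp (- \<alpha> * u) * D1 u v)"
proof -
  have eq: "(\<lambda>u. R (a u) (a v)) = (\<lambda>u. a u powr (2 * H) / 2 + (a v powr (2 * H) / 2 + (- 1 / 2) * psi u v))"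
    unfolding R_def psi_def by (simp add: field_simps)
  have c1: "continuous_on {t1..t2} (\<lambda>u. a u powr (2 * H) / 2)"
    using a_pos by (intro continuous_intros a_cont) (auto, metis less_irrefl)
  have c2: "continuous_on {t1..t2} (\<lambda>u. (- 1 / 2) * psi u v)"
    by (intro continuous_intros psi_cont)
  have "LO \<alpha> t1 t2 (\<lambda>u. R (a u) (a v)) = LO \<alpha> t1 t2 (\<lambda>u. a u powr (2 * H) / 2) +
      (LO \<alpha> t1 t2 (\<lambda>_. a v powr (2 * H) / 2) + LO \<alpha> t1 t2 (\<lambda>u. (- 1 / 2) * psi u v))"
  proof -
    have c3: "continuous_on {t1..t2} (\<lambda>u. a v powr (2 * H) / 2 + (- 1 / 2) * psi u v)"
      by (intro continuous_intros psi_cont)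
    show ?thesis
      unfolding eq LO_add[OF c1 c3] LO_add[OF continuous_on_const c2] ..
  qed
  also have "LO \<alpha> t1 t2 (\<lambda>_. a v powr (2 * H) / 2) = 0" by (rule LO_const[OF t])
  also have "LO \<alpha> t1 t2 (\<lambda>u. (- 1 / 2) * psi u v) = (- 1 / 2) * LO \<alpha> t1 t2 (\<lambda>u. psi u v)"
    by (rule LO_scale)
  also have "LO \<alpha> t1 t2 (\<lambda>u. psi u v) = integral {t1..t2} (\<lambda>u. exp (- \<alpha> * u) * D1 u v)"
    by (rule integral_unique[OF LO_psi[OF t], symmetric])
  finally show ?thesis by simp
qed

lemma wD1_cont: "continuous_on A (\<lambda>(x, y). exp (- \<alpha> * y) * D1 y x)"
proof -
  have pc: "continuous_on A (\<lambda>x::real\<times>real. (snd x, fst x))" by (intro continuous_intros)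
  have "continuous_on A (\<lambda>x. D1 (snd x) (fst x))"
    using continuous_on_compose2[OF D1_cont[of UNIV] pc] by auto
  then show ?thesis by (auto simp: case_prod_unfold intro!: continuous_intros)
qed

lemma wD1_cont': "continuous_on A (\<lambda>(x, y). exp (- \<alpha> * x) * D1 x y)"
proof -
  have "continuous_on A (\<lambda>x. D1 (fst x) (snd x))"
    using D1_cont by auto
  then show ?thesis by (auto simp: case_prod_unfold intro!: continuous_intros)
qed

lemma wD1_cont'': "continuous_on A (\<lambda>(x, y). exp (- \<alpha> * y) * D1 x y)"
proof -
  have "continuous_on A (\<lambda>x. D1 (fst x) (snd x))"
    using D1_cont by auto
  then show ?thesis by (auto simp: case_prod_unfold intro!: continuous_intros)
qed

lemma Kint: assumes s: "s1 \<le> s2" shows "(\<lambda>v. K u v) integrable_on {s1..s2}"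
proof -
  have C0: "C_alpha_H \<alpha> H \<noteq> 0" using C_pos by simp
  have i0: "(\<lambda>v. exp (- \<alpha> * v) * D2 u v) integrable_on {s1..s2}"
    using LO_D1[OF s] by blast
  then have "(\<lambda>v. (exp (- \<alpha> * u) / (- 2 * C_alpha_H \<alpha> H)) * (exp (- \<alpha> * v) * D2 u v)) integrable_on {s1..s2}"
    using integrable_on_cmult_left[OF i0, of "exp (- \<alpha> * u) / (- 2 * C_alpha_H \<alpha> H)"] by simp
  then show ?thesis
  proof (rule integrable_eq)
    fix v
    have "exp (- \<alpha> * u) * exp (- \<alpha> * v) * D2 u v = - 2 * C_alpha_H \<alpha> H * K u v" by (rule kernel_id)
    then show "(exp (- \<alpha> * u) / (- 2 * C_alpha_H \<alpha> H)) * (exp (- \<alpha> * v) * D2 u v) = K u v"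
      using C0 by (simp add: field_simps)
  qed
qed

lemma analytic_main:
  assumes t: "t1 \<le> t2" and s: "s1 \<le> s2"
  shows "LO \<alpha> s1 s2 (\<lambda>v. LO \<alpha> t1 t2 (\<lambda>u. R (a u) (a v))) = C_alpha_H \<alpha> H * (LBINT u=t1..t2. (LBINT v=s1..s2. K u v))"
proof -
  define \<kappa> where "\<kappa> = LO \<alpha> t1 t2 (\<lambda>u. a u powr (2 * H) / 2)"
  define G where "G v = integral {t1..t2} (\<lambda>u. exp (- \<alpha> * u) * D1 u v)" for v
  define I where "I u = integral {s1..s2} (\<lambda>v. exp (- \<alpha> * v) * D1 u v)" for u
  define J where "J u = LO \<alpha> s1 s2 (\<lambda>v. D1 u v)" for u
  define C where "C = C_alpha_H \<alpha> H"
  have C0: "C \<noteq> 0" using C_pos unfolding C_def by simp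
  have Gc: "continuous_on {s1..s2} G"
    unfolding G_def using integral_continuous_on_param[of "{s1..s2}" t1 t2 "\<lambda>x t. exp (- \<alpha> * t) * D1 t x"] wD1_cont
    by simp
  have Ic: "continuous_on A I" for A
    unfolding I_def using integral_continuous_on_param[of A s1 s2 "\<lambda>x t. exp (- \<alpha> * t) * D1 x t"] wD1_cont''
    by simp
  have Jint: "J u = integral {s1..s2} (\<lambda>v. exp (- \<alpha> * v) * D2 u v)" for u
    unfolding J_def by (rule integral_unique[OF LO_D1[OF s], symmetric])
  have Jeq: "J u = exp (- \<alpha> * s2) * D1 u s2 - exp (- \<alpha> * s1) * D1 u s1 + \<alpha> * I u" for u
    unfolding J_def LO_def I_def ..
  have Jc: "continuous_on {t1..t2} J"
    unfolding Jeq[abs_def] by (intro continuous_intros D1_cont_u Ic)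
  have step1: "(\<lambda>v. LO \<alpha> t1 t2 (\<lambda>u. R (a u) (a v))) = (\<lambda>v. \<kappa> + (- 1 / 2) * G v)"
    unfolding \<kappa>_def G_def by (rule ext, rule Phi_eq[OF t])
  have step2: "LO \<alpha> s1 s2 (\<lambda>v. \<kappa> + (- 1 / 2) * G v) = (- 1 / 2) * LO \<alpha> s1 s2 G"
  proof -
    have "continuous_on {s1..s2} (\<lambda>v. (- 1 / 2) * G v)" by (intro continuous_intros Gc)
    then show ?thesis
      by (simp only: LO_add[OF continuous_on_const] LO_const[OF s] LO_scale)
  qed
  have step3: "LO \<alpha> s1 s2 G = integral {t1..t2} (\<lambda>u. exp (- \<alpha> * u) * J u)"
  proof -
    define f where "f x y = exp (- \<alpha> * x) * (exp (- \<alpha> * y) * D1 y x)" for x y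
    have fc: "continuous_on (cbox (s1, t1) (s2, t2)) (\<lambda>(x, y). f x y)"
      using wD1_cont[of "cbox (s1, t1) (s2, t2)"] unfolding f_def
      by (auto simp: case_prod_unfold intro!: continuous_intros)
    have a1: "integral {s1..s2} (\<lambda>v. exp (- \<alpha> * v) * G v) = integral {s1..s2} (\<lambda>x. integral {t1..t2} (f x))"
      unfolding G_def f_def by simp
    also have "\<dots> = integral {t1..t2} (\<lambda>y. integral {s1..s2} (\<lambda>x. f x y))"
      using integral_swap_continuous[OF fc] by simp
    also have "\<dots> = integral {t1..t2} (\<lambda>u. exp (- \<alpha> * u) * I u)"
      unfolding f_def I_def by (simp add: mult.left_commute)
    finally have a: "integral {s1..s2} (\<lambda>v. exp (- \<alpha> * v) * G v) = integral {t1..t2} (\<lambda>u. exp (- \<alpha> * u) * I u)" .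
    have ci1: "(\<lambda>u. exp (- \<alpha> * s2) * (exp (- \<alpha> * u) * D1 u s2)) integrable_on {t1..t2}"
      by (intro integrable_continuous_interval continuous_intros D1_cont_u)
    have ci2: "(\<lambda>u. exp (- \<alpha> * s1) * (exp (- \<alpha> * u) * D1 u s1)) integrable_on {t1..t2}"
      by (intro integrable_continuous_interval continuous_intros D1_cont_u)
    have ci3: "(\<lambda>u. \<alpha> * (exp (- \<alpha> * u) * I u)) integrable_on {t1..t2}"
      by (intro integrable_continuous_interval continuous_intros Ic)
    have "integral {t1..t2} (\<lambda>u. exp (- \<alpha> * u) * J u) =
        integral {t1..t2} (\<lambda>u. exp (- \<alpha> * s2) * (exp (- \<alpha> * u) * D1 u s2) - exp (- \<alpha> * s1) * (exp (- \<alpha> * u) * D1 u s1)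
           + \<alpha> * (exp (- \<alpha> * u) * I u))"
      unfolding Jeq by (simp add: algebra_simps)
    also have "\<dots> = exp (- \<alpha> * s2) * G s2 - exp (- \<alpha> * s1) * G s1 + \<alpha> * integral {t1..t2} (\<lambda>u. exp (- \<alpha> * u) * I u)"
      unfolding G_def
      by (subst integral_add[OF integrable_diff[OF ci1 ci2] ci3], subst integral_diff[OF ci1 ci2]) simp
    finally show ?thesis unfolding LO_def a by simp
  qed
  have step4: "integral {t1..t2} (\<lambda>u. exp (- \<alpha> * u) * J u) = (- 2 * C) * integral {t1..t2} (\<lambda>u. integral {s1..s2} (\<lambda>v. K u v))"
  proof -
    have "exp (- \<alpha> * u) * J u = (- 2 * C) * integral {s1..s2} (\<lambda>v. K u v)" for u
    proof -
      have "exp (- \<alpha> * u) * J u = integral {s1..s2} (\<lambda>v. exp (- \<alpha> * u) * exp (- \<alpha> * v) * D2 u v)"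
        unfolding Jint by (simp add: mult.assoc)
      also have "\<dots> = integral {s1..s2} (\<lambda>v. (- 2 * C) * K u v)"
        unfolding kernel_id C_def ..
      finally show ?thesis by simp
    qed
    then show ?thesis by simp
  qed
  have gc: "continuous_on {t1..t2} (\<lambda>u. integral {s1..s2} (\<lambda>v. K u v))"
  proof -
    have "continuous_on {t1..t2} (\<lambda>u. (exp (- \<alpha> * u) * J u) / (- 2 * C))"
      by (intro continuous_intros Jc) (use C0 in auto)
    moreover have "(exp (- \<alpha> * u) * J u) / (- 2 * C) = integral {s1..s2} (\<lambda>v. K u v)" for u
    proof -
      have "exp (- \<alpha> * u) * J u = integral {s1..s2} (\<lambda>v. exp (- \<alpha> * u) * exp (- \<alpha> * v) * D2 u v)"
        unfolding Jint by (simp add: mult.assoc)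
      also have "\<dots> = integral {s1..s2} (\<lambda>v. (- 2 * C) * K u v)"
        unfolding kernel_id C_def ..
      finally show ?thesis using C0 by simp
    qed
    ultimately show ?thesis by simp
  qed
  have step5: "(LBINT u=t1..t2. (LBINT v=s1..s2. K u v)) = integral {t1..t2} (\<lambda>u. integral {s1..s2} (\<lambda>v. K u v))"
  proof -
    have "(\<lambda>u. (LBINT v=s1..s2. K u v)) = (\<lambda>u. integral {s1..s2} (\<lambda>v. K u v))"
      by (rule ext, rule lbint_nonneg_eq[OF s K_meas Kint[OF s] K_nonneg])
    then show ?thesis
      using interval_integral_eq_integral[OF t borel_integrable_atLeastAtMost'[OF gc]] by simp
  qed
  show ?thesis
    unfolding step1 step2 step3 step4 step5 C_def[symmetric] using C0 by simp
qed

lemma K_sym: "K u v = K v u"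
proof (cases "u = v")
  case True then show ?thesis by simp
next
  case False
  define x where "x = u - v"
  have x0: "x \<noteq> 0" using False unfolding x_def by simp
  define \<rho> where "\<rho> = 1 - exp (- \<alpha> * x / H)"
  have rne: "\<rho> \<noteq> 0" unfolding \<rho>_def using x0 al Hpos by simp
  have e1: "1 - exp (\<alpha> * x / H) = - exp (\<alpha> * x / H) * \<rho>"
    unfolding \<rho>_def by (simp add: algebra_simps exp_minus field_simps)
  have ab: "\<bar>1 - exp (\<alpha> * x / H)\<bar> powr (2 * (1 - H)) = exp (\<alpha> * x / H) powr (2 * (1 - H)) * \<bar>\<rho>\<bar> powr (2 * (1 - H))"
    unfolding e1 by (simp add: abs_mult powr_mult)
  have ep: "exp (\<alpha> * x / H) powr (2 * (1 - H)) = exp (2 * (1 - H) * (\<alpha> * x / H))"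
    by (simp add: powr_def)
  have "K v u = exp (- \<alpha> * (1 - H) * (- x) / H) / \<bar>1 - exp (- \<alpha> * (- x) / H)\<bar> powr (2 * (1 - H))"
    unfolding K_def x_def by simp
  also have "\<dots> = exp (\<alpha> * (1 - H) * x / H) / (exp (2 * (1 - H) * (\<alpha> * x / H)) * \<bar>\<rho>\<bar> powr (2 * (1 - H)))"
    using ab ep by simp
  also have "\<dots> = (exp (\<alpha> * (1 - H) * x / H) / exp (2 * (1 - H) * (\<alpha> * x / H))) / \<bar>\<rho>\<bar> powr (2 * (1 - H))"
    by simp
  also have "exp (\<alpha> * (1 - H) * x / H) / exp (2 * (1 - H) * (\<alpha> * x / H)) = exp (- \<alpha> * (1 - H) * x / H)"
    using Hpos by (simp add: exp_diff[symmetric] field_simps)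
  also have "exp (- \<alpha> * (1 - H) * x / H) / \<bar>\<rho>\<bar> powr (2 * (1 - H)) = K u v"
    unfolding K_def x_def \<rho>_def by simp
  finally show ?thesis by simp
qed

end

lemma joint_meas:
  fixes q :: "real \<Rightarrow> 'a \<Rightarrow> real"
  assumes qm: "\<And>v. q v \<in> borel_measurable M"
    and qc: "\<And>\<omega>. \<omega> \<in> space M \<Longrightarrow> continuous_on UNIV (\<lambda>v. q v \<omega>)"
  shows "(\<lambda>(v, \<omega>). q v \<omega>) \<in> borel_measurable (lborel \<Otimes>\<^sub>M M)"
proof (rule borel_measurable_LIMSEQ_real)
  define g where "g n x = q (real_of_int \<lfloor>fst x * real (Suc n)\<rfloor> / real (Suc n)) (snd x)" for n x
  show "(\<lambda>n. g n x) \<longlonglongrightarrow> (\<lambda>(v, \<omega>). q v \<omega>) x" if x: "x \<in> space (lborel \<Otimes>\<^sub>M M)" for x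
  proof -
    obtain v \<omega> where xe: "x = (v, \<omega>)" by (cases x)
    have om: "\<omega> \<in> space M" using x xe by (simp add: space_pair_measure)
    have lim: "(\<lambda>n. real_of_int \<lfloor>v * real (Suc n)\<rfloor> / real (Suc n)) \<longlonglongrightarrow> v"
    proof (rule tendsto_sandwich[where f="\<lambda>n. v - 1 / real (Suc n)" and h="\<lambda>n. v"])
      show "\<forall>\<^sub>F n in sequentially. v - 1 / real (Suc n) \<le> real_of_int \<lfloor>v * real (Suc n)\<rfloor> / real (Suc n)"
      proof (intro always_eventually allI)
        fix n
        define N where "N = real (Suc n)"
        have N: "N > 0" unfolding N_def by simp
        have i: "v * N - 1 \<le> real_of_int \<lfloor>v * N\<rfloor>" by linarith
        have "v - 1 / N = (v * N - 1) / N" using N by (simp add: field_simps)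
        also have "\<dots> \<le> real_of_int \<lfloor>v * N\<rfloor> / N" by (rule divide_right_mono[OF i]) (use N in simp)
        finally show "v - 1 / real (Suc n) \<le> real_of_int \<lfloor>v * real (Suc n)\<rfloor> / real (Suc n)"
          unfolding N_def .
      qed
      show "\<forall>\<^sub>F n in sequentially. real_of_int \<lfloor>v * real (Suc n)\<rfloor> / real (Suc n) \<le> v"
      proof (intro always_eventually allI)
        fix n
        have "real_of_int \<lfloor>v * real (Suc n)\<rfloor> \<le> v * real (Suc n)" by linarith
        then show "real_of_int \<lfloor>v * real (Suc n)\<rfloor> / real (Suc n) \<le> v"
          by (simp add: field_simps)
      qed
      show "(\<lambda>n. v - 1 / real (Suc n)) \<longlonglongrightarrow> v"
        using tendsto_diff[OF tendsto_const[of v] LIMSEQ_inverse_real_of_nat] by (simp add: inverse_eq_divide)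
    qed simp
    have "isCont (\<lambda>v. q v \<omega>) v" using qc[OF om] by (simp add: continuous_on_eq_continuous_at)
    then have "(\<lambda>n. q (real_of_int \<lfloor>v * real (Suc n)\<rfloor> / real (Suc n)) \<omega>) \<longlonglongrightarrow> q v \<omega>"
      using isCont_tendsto_compose lim by blast
    then show ?thesis unfolding g_def xe by simp
  qed
  show "g n \<in> borel_measurable (lborel \<Otimes>\<^sub>M M)" for n
  proof -
    have "(\<lambda>x. (\<lambda>i::int. q (real_of_int i / real (Suc n)) (snd x)) (\<lfloor>fst x * real (Suc n)\<rfloor>) ) \<in> borel_measurable (lborel \<Otimes>\<^sub>M M)"
    proof (rule measurable_compose_countable[where f="\<lambda>i x. q (real_of_int i / real (Suc n)) (snd x)"])
      show "(\<lambda>x. q (real_of_int i / real (Suc n)) (snd x)) \<in> borel_measurable (lborel \<Otimes>\<^sub>M M)" for i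
        by (rule measurable_compose[OF measurable_snd qm])
      show "(\<lambda>x. \<lfloor>fst x * real (Suc n)\<rfloor>) \<in> measurable (lborel \<Otimes>\<^sub>M M) (count_space UNIV)"
        by measurable
    qed
    then show ?thesis unfolding g_def by simp
  qed
qed

lemma fubini_path:
  fixes M :: "'a measure" and q :: "real \<Rightarrow> 'a \<Rightarrow> real" and F :: "'a \<Rightarrow> real" and w :: "real \<Rightarrow> real"
  assumes P: "prob_space M"
    and qm: "(\<lambda>(v, \<omega>). q v \<omega>) \<in> borel_measurable (lborel \<Otimes>\<^sub>M M)"
    and Fm: "F \<in> borel_measurable M"
    and cd: "c \<le> d"
    and wc: "continuous_on UNIV w"
    and qc: "\<And>\<omega>. \<omega> \<in> space M \<Longrightarrow> continuous_on {c..d} (\<lambda>v. q v \<omega>)"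
    and Fi: "\<And>v. v \<in> {c..d} \<Longrightarrow> integrable M (\<lambda>\<omega>. F \<omega> * q v \<omega>)"
    and Fb: "\<And>v. v \<in> {c..d} \<Longrightarrow> (\<integral>\<omega>. \<bar>F \<omega> * q v \<omega>\<bar> \<partial>M) \<le> B"
  shows "integrable M (\<lambda>\<omega>. F \<omega> * integral {c..d} (\<lambda>v. w v * q v \<omega>))"
    and "(\<integral>\<omega>. F \<omega> * integral {c..d} (\<lambda>v. w v * q v \<omega>) \<partial>M) = integral {c..d} (\<lambda>v. w v * (\<integral>\<omega>. F \<omega> * q v \<omega> \<partial>M))"
    and "(\<lambda>v. w v * (\<integral>\<omega>. F \<omega> * q v \<omega> \<partial>M)) integrable_on {c..d}"
proof -
  interpret prob_space M by (rule P)
  interpret pair_sigma_finite lborel M by unfold_locales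
  have wm[measurable]: "w \<in> borel_measurable borel" by (rule borel_measurable_continuous_onI[OF wc])
  note [measurable] = qm Fm
  obtain W where W: "\<And>v. v \<in> {c..d} \<Longrightarrow> \<bar>w v\<bar> \<le> W"
    using compact_imp_bounded[OF compact_continuous_image[OF continuous_on_subset[OF wc] compact_Icc]]
    unfolding bounded_iff by fastforce
  have "0 \<le> (\<integral>\<omega>. \<bar>F \<omega> * q c \<omega>\<bar> \<partial>M)" by (rule integral_nonneg_AE) auto
  then have B0: "0 \<le> B" using Fb[of c] cd by (meson atLeastAtMost_iff order_trans order_refl)
  have W0: "0 \<le> W" using W[of c] cd by force
  define f where "f v \<omega> = indicator {c..d} v * (w v * (F \<omega> * q v \<omega>))" for v \<omega>
  have fm[measurable]: "(\<lambda>(v, \<omega>). f v \<omega>) \<in> borel_measurable (lborel \<Otimes>\<^sub>M M)"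
    unfolding f_def by measurable
  have fint: "integrable (lborel \<Otimes>\<^sub>M M) (\<lambda>(v, \<omega>). f v \<omega>)"
  proof (rule Fubini_integrable)
    show "(\<lambda>(v, \<omega>). f v \<omega>) \<in> borel_measurable (lborel \<Otimes>\<^sub>M M)" by (rule fm)
    have "integrable lborel (\<lambda>v. indicator {c..d} v * (W * B))"
      by (intro integrable_mult_left) (simp add: cd)
    then show "integrable lborel (\<lambda>v. \<integral>\<omega>. norm ((\<lambda>(v, \<omega>). f v \<omega>) (v, \<omega>)) \<partial>M)"
    proof (rule Bochner_Integration.integrable_bound)
      show "(\<lambda>v. \<integral>\<omega>. norm ((\<lambda>(v, \<omega>). f v \<omega>) (v, \<omega>)) \<partial>M) \<in> borel_measurable lborel"
        by measurable
      show "AE v in lborel. norm (\<integral>\<omega>. norm ((\<lambda>(v, \<omega>). f v \<omega>) (v, \<omega>)) \<partial>M) \<le> norm (indicator {c..d} v * (W * B))"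
      proof (intro AE_I2)
        fix v
        show "norm (\<integral>\<omega>. norm ((\<lambda>(v, \<omega>). f v \<omega>) (v, \<omega>)) \<partial>M) \<le> norm (indicator {c..d} v * (W * B))"
        proof (cases "v \<in> {c..d}")
          case True
          have "(\<integral>\<omega>. norm (f v \<omega>) \<partial>M) = \<bar>w v\<bar> * (\<integral>\<omega>. \<bar>F \<omega> * q v \<omega>\<bar> \<partial>M)"
            unfolding f_def using True by (simp add: abs_mult)
          also have "\<dots> \<le> W * B"
            using True W Fb W0 by (intro mult_mono) (auto intro: integral_nonneg_AE)
          finally have "(\<integral>\<omega>. norm (f v \<omega>) \<partial>M) \<le> W * B" .
          moreover have "0 \<le> (\<integral>\<omega>. norm (f v \<omega>) \<partial>M)" by (rule integral_nonneg_AE) auto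
          ultimately show ?thesis using True W0 B0 by simp
        next
          case False
          then show ?thesis unfolding f_def by simp
        qed
      qed
    qed
    show "AE v in lborel. integrable M (\<lambda>\<omega>. (\<lambda>(v, \<omega>). f v \<omega>) (v, \<omega>))"
    proof (intro AE_I2)
      fix v
      show "integrable M (\<lambda>\<omega>. (\<lambda>(v, \<omega>). f v \<omega>) (v, \<omega>))"
      proof (cases "v \<in> {c..d}")
        case True
        then show ?thesis unfolding f_def using Fi[OF True] by simp
      next
        case False
        then show ?thesis unfolding f_def by simp
      qed
    qed
  qed
  have inner1: "(\<integral>v. f v \<omega> \<partial>lborel) = F \<omega> * integral {c..d} (\<lambda>v. w v * q v \<omega>)" if om: "\<omega> \<in> space M" for \<omega>
  proof -
    have si: "set_integrable lborel {c..d} (\<lambda>v. w v * q v \<omega>)"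
      by (rule borel_integrable_atLeastAtMost') (intro continuous_intros continuous_on_subset[OF wc] qc[OF om], auto)
    have "(\<integral>v. f v \<omega> \<partial>lborel) = F \<omega> * (LINT v:{c..d}|lborel. w v * q v \<omega>)"
      unfolding f_def set_lebesgue_integral_def by (simp add: mult.left_commute)
    also have "(LINT v:{c..d}|lborel. w v * q v \<omega>) = integral {c..d} (\<lambda>v. w v * q v \<omega>)"
      by (rule set_borel_integral_eq_integral(2)[OF si])
    finally show ?thesis .
  qed
  have inner2: "(\<integral>\<omega>. f v \<omega> \<partial>M) = indicator {c..d} v * (w v * (\<integral>\<omega>. F \<omega> * q v \<omega> \<partial>M))" for v
    unfolding f_def by simp
  have isnd: "integrable M (\<lambda>\<omega>. \<integral>v. f v \<omega> \<partial>lborel)"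
    using integrable_snd[OF fint] .
  show I: "integrable M (\<lambda>\<omega>. F \<omega> * integral {c..d} (\<lambda>v. w v * q v \<omega>))"
  proof -
    have "integrable M (\<lambda>\<omega>. \<integral>v. f v \<omega> \<partial>lborel) = integrable M (\<lambda>\<omega>. F \<omega> * integral {c..d} (\<lambda>v. w v * q v \<omega>))"
      by (rule Bochner_Integration.integrable_cong) (auto simp: inner1)
    then show ?thesis using isnd by simp
  qed
  have ifst: "integrable lborel (\<lambda>v. \<integral>\<omega>. f v \<omega> \<partial>M)"
    using integrable_fst[OF fint] .
  then have si2: "set_integrable lborel {c..d} (\<lambda>v. w v * (\<integral>\<omega>. F \<omega> * q v \<omega> \<partial>M))"
    unfolding set_integrable_def inner2 by simp
  show "(\<lambda>v. w v * (\<integral>\<omega>. F \<omega> * q v \<omega> \<partial>M)) integrable_on {c..d}"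
    by (rule set_borel_integral_eq_integral(1)[OF si2])
  have "(\<integral>\<omega>. F \<omega> * integral {c..d} (\<lambda>v. w v * q v \<omega>) \<partial>M) = (\<integral>\<omega>. (\<integral>v. f v \<omega> \<partial>lborel) \<partial>M)"
    by (intro Bochner_Integration.integral_cong refl inner1[symmetric]) auto
  also have "\<dots> = (\<integral>v. (\<integral>\<omega>. f v \<omega> \<partial>M) \<partial>lborel)"
    by (rule Fubini_integral[OF fint])
  also have "\<dots> = (LINT v:{c..d}|lborel. w v * (\<integral>\<omega>. F \<omega> * q v \<omega> \<partial>M))"
    unfolding inner2 set_lebesgue_integral_def by simp
  also have "\<dots> = integral {c..d} (\<lambda>v. w v * (\<integral>\<omega>. F \<omega> * q v \<omega> \<partial>M))"
    by (rule set_borel_integral_eq_integral(2)[OF si2])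
  finally show "(\<integral>\<omega>. F \<omega> * integral {c..d} (\<lambda>v. w v * q v \<omega>) \<partial>M) = integral {c..d} (\<lambda>v. w v * (\<integral>\<omega>. F \<omega> * q v \<omega> \<partial>M))" .
qed

lemma path_int_meas:
  fixes M :: "'a measure" and q :: "real \<Rightarrow> 'a \<Rightarrow> real" and w :: "real \<Rightarrow> real"
  assumes P: "prob_space M"
    and qm: "(\<lambda>(v, \<omega>). q v \<omega>) \<in> borel_measurable (lborel \<Otimes>\<^sub>M M)"
    and wc: "continuous_on UNIV w"
    and qc: "\<And>\<omega>. \<omega> \<in> space M \<Longrightarrow> continuous_on {c..d} (\<lambda>v. q v \<omega>)"
  shows "(\<lambda>\<omega>. integral {c..d} (\<lambda>v. w v * q v \<omega>)) \<in> borel_measurable M"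
proof -
  interpret prob_space M by (rule P)
  interpret pair_sigma_finite lborel M by unfold_locales
  have wm[measurable]: "w \<in> borel_measurable borel" by (rule borel_measurable_continuous_onI[OF wc])
  have qm'[measurable]: "(\<lambda>(\<omega>, v). q v \<omega>) \<in> borel_measurable (M \<Otimes>\<^sub>M lborel)"
    using measurable_pair_swap[OF qm] by (simp add: case_prod_unfold)
  have m: "(\<lambda>\<omega>. \<integral>v. indicator {c..d} v * (w v * q v \<omega>) \<partial>lborel) \<in> borel_measurable M"
    by measurable
  show ?thesis
  proof (rule measurable_cong[THEN iffD1, OF _ m])
    fix \<omega> assume om: "\<omega> \<in> space M"
    have si: "set_integrable lborel {c..d} (\<lambda>v. w v * q v \<omega>)"
      by (rule borel_integrable_atLeastAtMost') (intro continuous_intros continuous_on_subset[OF wc] qc[OF om], auto)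
    show "(\<integral>v. indicator {c..d} v * (w v * q v \<omega>) \<partial>lborel) = integral {c..d} (\<lambda>v. w v * q v \<omega>)"
      using set_borel_integral_eq_integral(2)[OF si] unfolding set_lebesgue_integral_def by simp
  qed
qed

lemma abs_prod_le: "\<bar>x * y\<bar> \<le> (1/2) * (x * x + y * y)" for x y :: real
proof -
  have "2 * \<bar>x\<bar> * \<bar>y\<bar> \<le> \<bar>x\<bar>\<^sup>2 + \<bar>y\<bar>\<^sup>2" by (rule sum_squares_bound)
  then show ?thesis by (simp add: abs_mult power2_eq_square)
qed

locale fbm_ctx = fbmp \<alpha> H for \<alpha> H +
  fixes M :: "'a measure" and Z :: "real \<Rightarrow> 'a \<Rightarrow> real"
  assumes fbm: "continuous_fbm M H Z"
begin

definition p where "p u \<omega> = Z (a u) \<omega>" for u \<omega>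
definition m where "m u = a u powr (2 * H)" for u

lemma fbm_conj: "prob_space M \<and> (\<forall>t \<ge> 0. Z t \<in> borel_measurable M) \<and>
     (\<forall>t s. t \<ge> 0 \<longrightarrow> s \<ge> 0 \<longrightarrow>
        integral\<^sup>L M (\<lambda>\<omega>. Z t \<omega> * Z s \<omega>)
          = (t powr (2*H) + s powr (2*H) - \<bar>t - s\<bar> powr (2*H)) / 2) \<and>
     (\<forall>\<omega> \<in> space M. continuous_on {0..} (\<lambda>t. Z t \<omega>))"
  using fbm unfolding continuous_fbm_def by (elim conjE) (intro conjI)

lemma P: "prob_space M" using fbm_conj by (rule conjunct1)

sublocale prob_space M by (rule P)

lemma pm[measurable]: "p u \<in> borel_measurable M"
proof -
  have "Z (a u) \<in> borel_measurable M" using fbm_conj less_imp_le[OF a_pos[of u]] by blast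
  then show ?thesis unfolding p_def[abs_def] by simp
qed

lemma pc: assumes "\<omega> \<in> space M" shows "continuous_on A (\<lambda>u. p u \<omega>)"
proof -
  have c: "continuous_on {0..} (\<lambda>t. Z t \<omega>)" using fbm_conj assms by blast
  show ?thesis unfolding p_def
    by (rule continuous_on_compose2[OF c a_cont]) (auto intro: less_imp_le[OF a_pos])
qed

lemma cov: "(\<integral>\<omega>. p u \<omega> * p v \<omega> \<partial>M) = R (a u) (a v)"
proof -
  have "\<forall>t s. t \<ge> 0 \<longrightarrow> s \<ge> 0 \<longrightarrow>
        integral\<^sup>L M (\<lambda>\<omega>. Z t \<omega> * Z s \<omega>)
          = (t powr (2*H) + s powr (2*H) - \<bar>t - s\<bar> powr (2*H)) / 2" using fbm_conj by blast
  then show ?thesis unfolding p_def R_def using less_imp_le[OF a_pos[of u]] less_imp_le[OF a_pos[of v]] by simp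
qed

lemma sq_int: "integrable M (\<lambda>\<omega>. p u \<omega> * p u \<omega>)"
proof (rule ccontr)
  assume "\<not> ?thesis"
  then have "(\<integral>\<omega>. p u \<omega> * p u \<omega> \<partial>M) = 0" by (rule not_integrable_integral_eq)
  moreover have "R (a u) (a u) > 0" unfolding R_def using a_pos[of u] by simp
  ultimately show False using cov[of u u] by simp
qed

lemma sq_E: "(\<integral>\<omega>. p u \<omega> * p u \<omega> \<partial>M) = m u"
  unfolding cov R_def m_def by simp

lemma prod_int: "integrable M (\<lambda>\<omega>. p u \<omega> * p v \<omega>)"
proof (rule Bochner_Integration.integrable_bound)
  show "integrable M (\<lambda>\<omega>. (1/2) * (p u \<omega> * p u \<omega> + p v \<omega> * p v \<omega>))"
    by (intro integrable_mult_right Bochner_Integration.integrable_add sq_int)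
  show "AE \<omega> in M. norm (p u \<omega> * p v \<omega>) \<le> norm ((1/2) * (p u \<omega> * p u \<omega> + p v \<omega> * p v \<omega>))"
    using abs_prod_le by (intro AE_I2) simp
qed simp

lemma prod_abs_bound: "(\<integral>\<omega>. \<bar>p u \<omega> * p v \<omega>\<bar> \<partial>M) \<le> (m u + m v) / 2"
proof -
  have "(\<integral>\<omega>. \<bar>p u \<omega> * p v \<omega>\<bar> \<partial>M) \<le> (\<integral>\<omega>. (1/2) * (p u \<omega> * p u \<omega> + p v \<omega> * p v \<omega>) \<partial>M)"
    by (intro integral_mono Bochner_Integration.integrable_abs prod_int abs_prod_le
        integrable_mult_right Bochner_Integration.integrable_add sq_int)
  also have "\<dots> = (m u + m v) / 2"
    by (simp add: Bochner_Integration.integral_add[OF sq_int sq_int] sq_E)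
  finally show ?thesis .
qed

lemma m_mono: assumes "u \<le> v" shows "m u \<le> m v"
proof -
  have "a u \<le> a v" unfolding fbm_time_change_def using assms al Hpos
    by (intro divide_right_mono mult_left_mono) (auto simp: divide_right_mono)
  then show ?thesis unfolding m_def using a_pos[of u] Hpos by (intro powr_mono2) auto
qed

lemma m_nonneg: "0 \<le> m u" unfolding m_def by simp

lemma joint[measurable]: "(\<lambda>(v, \<omega>). p v \<omega>) \<in> borel_measurable (lborel \<Otimes>\<^sub>M M)"
  by (rule joint_meas[OF pm pc])

lemma joint_abs: "(\<lambda>(v, \<omega>). \<bar>p v \<omega>\<bar>) \<in> borel_measurable (lborel \<Otimes>\<^sub>M M)"
  using borel_measurable_abs[OF joint] by (simp add: case_prod_unfold)

lemma R_sym: "R x y = R y x"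
  unfolding R_def by (simp add: abs_minus_commute algebra_simps)

lemma exp_cont: "continuous_on UNIV (\<lambda>u. exp (- \<alpha> * u))"
  by (intro continuous_intros)

definition I where "I c d \<omega> = integral {c..d} (\<lambda>u. exp (- \<alpha> * u) * p u \<omega>)" for c d \<omega>
definition L where "L c d \<omega> = LO \<alpha> c d (\<lambda>u. p u \<omega>)" for c d \<omega>

lemma L_eq: "L c d \<omega> = exp (- \<alpha> * d) * p d \<omega> - exp (- \<alpha> * c) * p c \<omega> + \<alpha> * I c d \<omega>"
  unfolding L_def LO_def I_def ..

lemma I_meas: "I c d \<in> borel_measurable M"
  unfolding I_def[abs_def] by (rule path_int_meas[OF P joint exp_cont pc])

lemma L_meas[measurable]: "L c d \<in> borel_measurable M"
proof -
  have [measurable]: "I c d \<in> borel_measurable M" by (rule I_meas)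
  show ?thesis unfolding L_eq[abs_def] by measurable
qed

lemma Y_eq: assumes om: "\<omega> \<in> space M" and t: "0 \<le> t"
  shows "Y_alpha \<alpha> H Z t \<omega> = exp (- \<alpha> * t) * p t \<omega> - p 0 \<omega> + \<alpha> * I 0 t \<omega>"
proof -
  have eq: "(\<lambda>s. Z (fbm_time_change \<alpha> H s) \<omega>) = (\<lambda>s. p s \<omega>)" unfolding p_def ..
  have "has_rs_integral (\<lambda>s. exp (- \<alpha> * s)) (\<lambda>s. p s \<omega>) 0 t
           (exp (- \<alpha> * t) * p t \<omega> - exp (- \<alpha> * 0) * p 0 \<omega> + \<alpha> * integral {0..t} (\<lambda>s. exp (- \<alpha> * s) * p s \<omega>))"
    by (rule rs_exists[OF order_refl t al pc[OF om]])
  then have "rs_integral (\<lambda>s. exp (- \<alpha> * s)) (\<lambda>s. p s \<omega>) 0 t =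
           exp (- \<alpha> * t) * p t \<omega> - exp (- \<alpha> * 0) * p 0 \<omega> + \<alpha> * integral {0..t} (\<lambda>s. exp (- \<alpha> * s) * p s \<omega>)"
    by (rule rs_integral_eq[OF t])
  then show ?thesis unfolding Y_alpha_def eq I_def by simp
qed

lemma incr: assumes om: "\<omega> \<in> space M" and c: "0 \<le> c" and cd: "c \<le> d"
  shows "Y_alpha \<alpha> H Z d \<omega> - Y_alpha \<alpha> H Z c \<omega> = L c d \<omega>"
proof -
  have "I 0 c \<omega> + I c d \<omega> = I 0 d \<omega>"
    unfolding I_def using c cd
    by (intro Henstock_Kurzweil_Integration.integral_combine integrable_continuous_interval continuous_intros pc[OF om]) auto
  then have "\<alpha> * I 0 d \<omega> = \<alpha> * I 0 c \<omega> + \<alpha> * I c d \<omega>" by (simp add: distrib_left[symmetric])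
  then show ?thesis
    unfolding Y_eq[OF om c] Y_eq[OF om order_trans[OF c cd]] L_eq by (simp add: algebra_simps)
qed

lemma P1:
  assumes cd: "c \<le> d"
  shows "integrable M (\<lambda>\<omega>. L c d \<omega> * p v \<omega>)"
    and "(\<integral>\<omega>. L c d \<omega> * p v \<omega> \<partial>M) = LO \<alpha> c d (\<lambda>u. R (a u) (a v))"
proof -
  have Fb: "(\<integral>\<omega>. \<bar>p v \<omega> * p u \<omega>\<bar> \<partial>M) \<le> (m v + m d) / 2" if "u \<in> {c..d}" for u
    using prod_abs_bound[of v u] m_mono[of u d] that by simp
  note fb = fubini_path[OF P joint pm[of v] cd exp_cont pc prod_int Fb]
  have int1: "integrable M (\<lambda>\<omega>. p v \<omega> * I c d \<omega>)"
    using fb(1) unfolding I_def .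
  have E1: "(\<integral>\<omega>. p v \<omega> * I c d \<omega> \<partial>M) = integral {c..d} (\<lambda>u. exp (- \<alpha> * u) * R (a u) (a v))"
    using fb(2) unfolding I_def[symmetric] cov by (simp add: R_sym)
  have eq: "(\<lambda>\<omega>. L c d \<omega> * p v \<omega>) = (\<lambda>\<omega>. exp (- \<alpha> * d) * (p d \<omega> * p v \<omega>) - exp (- \<alpha> * c) * (p c \<omega> * p v \<omega>)
      + \<alpha> * (p v \<omega> * I c d \<omega>))"
    unfolding L_eq by (simp add: algebra_simps)
  show "integrable M (\<lambda>\<omega>. L c d \<omega> * p v \<omega>)"
    unfolding eq by (intro Bochner_Integration.integrable_add Bochner_Integration.integrable_diff integrable_mult_right prod_int int1)
  show "(\<integral>\<omega>. L c d \<omega> * p v \<omega> \<partial>M) = LO \<alpha> c d (\<lambda>u. R (a u) (a v))"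
    unfolding eq
    by (simp add: Bochner_Integration.integral_add Bochner_Integration.integral_diff
          Bochner_Integration.integrable_add Bochner_Integration.integrable_diff prod_int int1 cov E1 LO_def)
qed

lemma P2:
  assumes c0: "0 \<le> c" and cd: "c \<le> d"
  shows "(\<integral>\<omega>. \<bar>L c d \<omega> * p v \<omega>\<bar> \<partial>M) \<le>
     exp (- \<alpha> * d) * ((m d + m v) / 2) + exp (- \<alpha> * c) * ((m c + m v) / 2) + \<alpha> * ((d - c) * ((m v + m d) / 2))"
proof -
  define J where "J \<omega> = integral {c..d} (\<lambda>u. exp (- \<alpha> * u) * \<bar>p u \<omega>\<bar>)" for \<omega>
  have Fb: "(\<integral>\<omega>. \<bar>\<bar>p v \<omega>\<bar> * \<bar>p u \<omega>\<bar>\<bar> \<partial>M) \<le> (m v + m d) / 2" if "u \<in> {c..d}" for u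
    using prod_abs_bound[of v u] m_mono[of u d] that by (simp add: abs_mult)
  have Fi: "integrable M (\<lambda>\<omega>. \<bar>p v \<omega>\<bar> * \<bar>p u \<omega>\<bar>)" for u
    using Bochner_Integration.integrable_abs[OF prod_int[of v u]] by (simp add: abs_mult)
  have pca: "continuous_on {c..d} (\<lambda>u. \<bar>p u \<omega>\<bar>)" if "\<omega> \<in> space M" for \<omega>
    by (intro continuous_intros pc[OF that])
  have Fm: "(\<lambda>\<omega>. \<bar>p v \<omega>\<bar>) \<in> borel_measurable M" by measurable
  note fb = fubini_path[where q="\<lambda>u \<omega>. \<bar>p u \<omega>\<bar>", OF P joint_abs Fm cd exp_cont pca Fi Fb]
  have intJ: "integrable M (\<lambda>\<omega>. \<bar>p v \<omega>\<bar> * J \<omega>)" using fb(1) unfolding J_def .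
  have EJ: "(\<integral>\<omega>. \<bar>p v \<omega>\<bar> * J \<omega> \<partial>M) \<le> (d - c) * ((m v + m d) / 2)"
  proof -
    have "(\<integral>\<omega>. \<bar>p v \<omega>\<bar> * J \<omega> \<partial>M) = integral {c..d} (\<lambda>u. exp (- \<alpha> * u) * (\<integral>\<omega>. \<bar>p v \<omega>\<bar> * \<bar>p u \<omega>\<bar> \<partial>M))"
      using fb(2) unfolding J_def .
    also have "\<dots> \<le> integral {c..d} (\<lambda>u. (m v + m d) / 2)"
    proof (rule integral_le[OF fb(3)])
      show "(\<lambda>u. (m v + m d) / 2) integrable_on {c..d}" by (rule integrable_const_ivl)
      fix u assume u: "u \<in> {c..d}"
      have e1: "exp (- \<alpha> * u) \<le> 1" using u c0 al by (simp add: mult_nonneg_nonneg)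
      have E0: "0 \<le> (\<integral>\<omega>. \<bar>p v \<omega>\<bar> * \<bar>p u \<omega>\<bar> \<partial>M)" by (rule integral_nonneg_AE) auto
      have E1: "(\<integral>\<omega>. \<bar>p v \<omega>\<bar> * \<bar>p u \<omega>\<bar> \<partial>M) \<le> (m v + m d) / 2" using Fb[OF u] by (simp add: abs_mult)
      have "exp (- \<alpha> * u) * (\<integral>\<omega>. \<bar>p v \<omega>\<bar> * \<bar>p u \<omega>\<bar> \<partial>M) \<le> 1 * ((m v + m d) / 2)"
        using e1 E0 E1 by (intro mult_mono) auto
      then show "exp (- \<alpha> * u) * (\<integral>\<omega>. \<bar>p v \<omega>\<bar> * \<bar>p u \<omega>\<bar> \<partial>M) \<le> (m v + m d) / 2" by simp
    qed
    also have "\<dots> = (d - c) * ((m v + m d) / 2)" using cd by simp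
    finally show ?thesis .
  qed
  define G where "G \<omega> = exp (- \<alpha> * d) * \<bar>p d \<omega> * p v \<omega>\<bar> + exp (- \<alpha> * c) * \<bar>p c \<omega> * p v \<omega>\<bar> + \<alpha> * (\<bar>p v \<omega>\<bar> * J \<omega>)" for \<omega>
  have intG: "integrable M G"
    unfolding G_def[abs_def]
    by (intro Bochner_Integration.integrable_add integrable_mult_right Bochner_Integration.integrable_abs prod_int intJ)
  have pw: "\<bar>L c d \<omega> * p v \<omega>\<bar> \<le> G \<omega>" if om: "\<omega> \<in> space M" for \<omega>
  proof -
    have IJ: "\<bar>I c d \<omega>\<bar> \<le> J \<omega>"
      unfolding I_def J_def
      using integral_norm_bound_integral[of "\<lambda>u. exp (- \<alpha> * u) * p u \<omega>" "{c..d}" "\<lambda>u. exp (- \<alpha> * u) * \<bar>p u \<omega>\<bar>"]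
      by (simp add: integrable_continuous_interval continuous_intros pc[OF om] abs_mult)
    have "\<bar>L c d \<omega> * p v \<omega>\<bar> = \<bar>exp (- \<alpha> * d) * (p d \<omega> * p v \<omega>) - exp (- \<alpha> * c) * (p c \<omega> * p v \<omega>) + \<alpha> * (I c d \<omega> * p v \<omega>)\<bar>"
      unfolding L_eq by (simp add: algebra_simps)
    also have "\<dots> \<le> \<bar>exp (- \<alpha> * d) * (p d \<omega> * p v \<omega>)\<bar> + \<bar>exp (- \<alpha> * c) * (p c \<omega> * p v \<omega>)\<bar> + \<bar>\<alpha> * (I c d \<omega> * p v \<omega>)\<bar>"
      by (rule order_trans[OF abs_triangle_ineq add_right_mono[OF abs_triangle_ineq4]])
    also have "\<bar>\<alpha> * (I c d \<omega> * p v \<omega>)\<bar> \<le> \<alpha> * (\<bar>p v \<omega>\<bar> * J \<omega>)"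
    proof -
      have "\<bar>p v \<omega>\<bar> * \<bar>I c d \<omega>\<bar> \<le> \<bar>p v \<omega>\<bar> * J \<omega>" using IJ by (intro mult_left_mono) auto
      then show ?thesis using al by (simp add: abs_mult mult.commute)
    qed
    finally show ?thesis unfolding G_def by (simp add: abs_mult)
  qed
  have "(\<integral>\<omega>. \<bar>L c d \<omega> * p v \<omega>\<bar> \<partial>M) \<le> (\<integral>\<omega>. G \<omega> \<partial>M)"
    by (rule integral_mono[OF Bochner_Integration.integrable_abs[OF P1(1)[OF cd]] intG pw]) (simp add: space_def)
  also have "(\<integral>\<omega>. G \<omega> \<partial>M) = exp (- \<alpha> * d) * (\<integral>\<omega>. \<bar>p d \<omega> * p v \<omega>\<bar> \<partial>M) + exp (- \<alpha> * c) * (\<integral>\<omega>. \<bar>p c \<omega> * p v \<omega>\<bar> \<partial>M)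
       + \<alpha> * (\<integral>\<omega>. \<bar>p v \<omega>\<bar> * J \<omega> \<partial>M)"
    unfolding G_def
    by (simp add: Bochner_Integration.integral_add Bochner_Integration.integrable_add
        Bochner_Integration.integrable_abs prod_int intJ)
  also have "\<dots> \<le> exp (- \<alpha> * d) * ((m d + m v) / 2) + exp (- \<alpha> * c) * ((m c + m v) / 2) + \<alpha> * ((d - c) * ((m v + m d) / 2))"
    using prod_abs_bound[of d v] prod_abs_bound[of c v] EJ al
    by (intro add_mono mult_left_mono) auto
  finally show ?thesis .
qed

lemma main_prob:
  assumes t0: "0 \<le> t1" and t: "t1 \<le> t2" and s0: "0 \<le> s1" and s: "s1 \<le> s2"
  shows "(\<integral>\<omega>. L t1 t2 \<omega> * L s1 s2 \<omega> \<partial>M) = LO \<alpha> s1 s2 (\<lambda>v. LO \<alpha> t1 t2 (\<lambda>u. R (a u) (a v)))"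
proof -
  define B where "B = exp (- \<alpha> * t2) * ((m t2 + m s2) / 2) + exp (- \<alpha> * t1) * ((m t1 + m s2) / 2) + \<alpha> * ((t2 - t1) * ((m s2 + m t2) / 2))"
  have Fb: "(\<integral>\<omega>. \<bar>L t1 t2 \<omega> * p v \<omega>\<bar> \<partial>M) \<le> B" if v: "v \<in> {s1..s2}" for v
  proof -
    have mv: "m v \<le> m s2" using v by (intro m_mono) auto
    have "exp (- \<alpha> * t2) * ((m t2 + m v) / 2) + exp (- \<alpha> * t1) * ((m t1 + m v) / 2) + \<alpha> * ((t2 - t1) * ((m v + m t2) / 2)) \<le> B"
      unfolding B_def using mv al t by (intro add_mono mult_left_mono) auto
    then show ?thesis using P2[OF t0 t, of v] by linarith
  qed
  have Fi: "integrable M (\<lambda>\<omega>. L t1 t2 \<omega> * p v \<omega>)" for v by (rule P1(1)[OF t])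
  have pcs: "continuous_on {s1..s2} (\<lambda>v. p v \<omega>)" if "\<omega> \<in> space M" for \<omega> by (rule pc[OF that])
  note fb = fubini_path[OF P joint L_meas s exp_cont pcs Fi Fb]
  have int3: "integrable M (\<lambda>\<omega>. L t1 t2 \<omega> * I s1 s2 \<omega>)" using fb(1) unfolding I_def .
  have E3: "(\<integral>\<omega>. L t1 t2 \<omega> * I s1 s2 \<omega> \<partial>M) = integral {s1..s2} (\<lambda>v. exp (- \<alpha> * v) * LO \<alpha> t1 t2 (\<lambda>u. R (a u) (a v)))"
    using fb(2) unfolding I_def[symmetric] P1(2)[OF t] .
  have eq: "(\<lambda>\<omega>. L t1 t2 \<omega> * L s1 s2 \<omega>) = (\<lambda>\<omega>. exp (- \<alpha> * s2) * (L t1 t2 \<omega> * p s2 \<omega>) - exp (- \<alpha> * s1) * (L t1 t2 \<omega> * p s1 \<omega>)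
      + \<alpha> * (L t1 t2 \<omega> * I s1 s2 \<omega>))"
    unfolding L_eq[of s1 s2] by (simp add: algebra_simps)
  show ?thesis
    unfolding eq
    by (simp add: Bochner_Integration.integral_add Bochner_Integration.integral_diff
          Bochner_Integration.integrable_add Bochner_Integration.integrable_diff Fi int3 E3 P1(2)[OF t] LO_def)
qed

end

theorem proposition3p4:
  fixes M :: "'a measure" and Z :: "real \<Rightarrow> 'a \<Rightarrow> real"
    and H \<alpha> t1 t2 s1 s2 :: real
  assumes "1/2 < H" and "H < 1"
    and "continuous_fbm M H Z"
    and "\<alpha> > 0"
    and "0 \<le> t1" and "t1 < t2" and "0 \<le> s1" and "s1 < s2"
  shows "integral\<^sup>L M (\<lambda>\<omega>. (Y_alpha \<alpha> H Z t2 \<omega> - Y_alpha \<alpha> H Z t1 \<omega>) *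
                            (Y_alpha \<alpha> H Z s2 \<omega> - Y_alpha \<alpha> H Z s1 \<omega>))
         = C_alpha_H \<alpha> H *
           (LBINT u=t1..t2. (LBINT v=s1..s2.
              exp (- \<alpha> * (1 - H) * (u - v) / H) / \<bar>1 - exp (- \<alpha> * (u - v) / H)\<bar> powr (2 * (1 - H))))
       \<and> (\<forall>u v. r_kernel \<alpha> H u v = r_kernel \<alpha> H v u)"
proof -
  interpret fbm_ctx \<alpha> H M Z
    by unfold_locales (use assms in auto)
  have t: "t1 \<le> t2" and s: "s1 \<le> s2" using assms by auto
  have "integral\<^sup>L M (\<lambda>\<omega>. (Y_alpha \<alpha> H Z t2 \<omega> - Y_alpha \<alpha> H Z t1 \<omega>) *
                            (Y_alpha \<alpha> H Z s2 \<omega> - Y_alpha \<alpha> H Z s1 \<omega>))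
      = (\<integral>\<omega>. L t1 t2 \<omega> * L s1 s2 \<omega> \<partial>M)"
    by (rule Bochner_Integration.integral_cong[OF refl]) (simp add: incr assms t s)
  also have "\<dots> = LO \<alpha> s1 s2 (\<lambda>v. LO \<alpha> t1 t2 (\<lambda>u. R (a u) (a v)))"
    by (rule main_prob) (use assms in auto)
  also have "\<dots> = C_alpha_H \<alpha> H * (LBINT u=t1..t2. (LBINT v=s1..s2. K u v))"
    by (rule analytic_main[OF t s])
  finally have A: "integral\<^sup>L M (\<lambda>\<omega>. (Y_alpha \<alpha> H Z t2 \<omega> - Y_alpha \<alpha> H Z t1 \<omega>) *
                            (Y_alpha \<alpha> H Z s2 \<omega> - Y_alpha \<alpha> H Z s1 \<omega>))
         = C_alpha_H \<alpha> H *
           (LBINT u=t1..t2. (LBINT v=s1..s2.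
              exp (- \<alpha> * (1 - H) * (u - v) / H) / \<bar>1 - exp (- \<alpha> * (u - v) / H)\<bar> powr (2 * (1 - H))))"
    unfolding K_def .
  have B: "\<forall>u v. r_kernel \<alpha> H u v = r_kernel \<alpha> H v u"
  proof (intro allI)
    fix u v
    have "r_kernel \<alpha> H u v = C_alpha_H \<alpha> H * K u v" for u v unfolding r_kernel_def K_def ..
    then show "r_kernel \<alpha> H u v = r_kernel \<alpha> H v u" using K_sym[of u v] by simp
  qed
  show ?thesis using A B by blast
qed

end
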